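(* Let $R$ be a commutative ring and $N\subset M$ $R$-modules with $N$ finitely generated and $M$ finitely presented. For each positive integer $r$, the ideal $\mathrm{Fitt}_R(M/N)$ annihilates the cokernel of the canonical map $\bigwedge^r_RN\to\bigwedge^r_RM$.
   Context: $\mathrm{Fitt}_R$ denotes the $0$th Fitting ideal. *)

theory Defs
  imports Main HOL.Modules "HOL-Library.Function_Algebras" "HOL-Combinatorics.Permutations"
begin

text \<open>Setting: a commutative ring is a type 'a of class comm_ring_1; an R-module M is a type 'm
  of class ab_group_add with a scalar multiplication sc satisfying the module axioms
  (locale module from Main); submodules are sets N with module.subspace sc N.\<close>

definition pscale :: "'a::comm_ring_1 \<Rightarrow> ('i \<Rightarrow> 'a) \<Rightarrow> ('i \<Rightarrow> 'a)" where
  "pscale c f = (\<lambda>x. c * f x)"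

definition ideal_gen :: "'a::comm_ring_1 set \<Rightarrow> 'a set" where
  "ideal_gen S = module.span ((*)) S"

definition detn :: "nat \<Rightarrow> (nat \<Rightarrow> nat \<Rightarrow> 'a::comm_ring_1) \<Rightarrow> 'a" where
  "detn n A = (\<Sum>p | p permutes {..<n}. of_int (sign p) * (\<Prod>i<n. A i (p i)))"

definition fin_gen_sub :: "('a::comm_ring_1 \<Rightarrow> 'm::ab_group_add \<Rightarrow> 'm) \<Rightarrow> 'm set \<Rightarrow> bool" where
  "fin_gen_sub sc N \<longleftrightarrow> (\<exists>B. finite B \<and> B \<subseteq> N \<and> module.span sc B = N)"

text \<open>M (the whole type) is finitely presented: generated by finitely many elements g 0..g (n-1)
  whose module of relations (a submodule of R^n, coordinates outside {..<n} zero) is f.g.\<close>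
definition fin_presented :: "('a::comm_ring_1 \<Rightarrow> 'm::ab_group_add \<Rightarrow> 'm) \<Rightarrow> bool" where
  "fin_presented sc \<longleftrightarrow> (\<exists>n (g :: nat \<Rightarrow> 'm).
     module.span sc (g ` {..<n}) = UNIV \<and>
     fin_gen_sub pscale {c :: nat \<Rightarrow> 'a. (\<forall>j\<ge>n. c j = 0) \<and> (\<Sum>j<n. sc (c j) (g j)) = 0})"

text \<open>0th Fitting ideal of M/N (M = whole type): for generators g 0..g (n-1) of M/N
  (i.e. span of the g j plus N is M), the ideal generated by the determinants of all n x n
  matrices whose rows are relations of the images of the g j in M/N; we take the ideal
  generated by these minors for all finite generating families (the standard
  presentation-independence makes this the usual Fitt_0).\<close>
definition fitt_quot :: "('a::comm_ring_1 \<Rightarrow> 'm::ab_group_add \<Rightarrow> 'm) \<Rightarrow> 'm set \<Rightarrow> 'a set" where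
  "fitt_quot sc N = ideal_gen {detn n A | n (g :: nat \<Rightarrow> 'm) A.
      (\<forall>m. \<exists>v\<in>module.span sc (g ` {..<n}). \<exists>y\<in>N. m = v + y) \<and>
      (\<forall>i<n. (\<Sum>j<n. sc (A i j) (g j)) \<in> N)}"

text \<open>Exterior power as F/K: F the free module with basis the r-tuples of M (functions
  'm list \<Rightarrow> 'a, basis vectors ebas xs), K the submodule generated by the multilinearity
  and alternating relations.\<close>
definition ebas :: "'m list \<Rightarrow> ('m list \<Rightarrow> 'a::comm_ring_1)" where
  "ebas xs = (\<lambda>ys. if ys = xs then 1 else 0)"

definition free_tuples :: "('a::comm_ring_1 \<Rightarrow> 'm \<Rightarrow> 'm) \<Rightarrow> nat \<Rightarrow> ('m list \<Rightarrow> 'a) set" where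
  "free_tuples sc r = module.span pscale {ebas xs | xs. length xs = r}"

definition ext_rels :: "('a::comm_ring_1 \<Rightarrow> 'm::ab_group_add \<Rightarrow> 'm) \<Rightarrow> nat \<Rightarrow> ('m list \<Rightarrow> 'a) set" where
  "ext_rels sc r =
     {ebas (xs[i := x + y]) - ebas (xs[i := x]) - ebas (xs[i := y]) | xs i x y. length xs = r \<and> i < r}
   \<union> {ebas (xs[i := sc c x]) - pscale c (ebas (xs[i := x])) | xs i c x. length xs = r \<and> i < r}
   \<union> {ebas xs | xs. length xs = r \<and> (\<exists>i j. i < r \<and> j < r \<and> i \<noteq> j \<and> xs ! i = xs ! j)}"

text \<open>Preimage in F of the image of the canonical map from wedge^r N to wedge^r M:
  span of the basis tuples with entries in N, plus K.\<close>
definition ext_image_sub :: "('a::comm_ring_1 \<Rightarrow> 'm::ab_group_add \<Rightarrow> 'm) \<Rightarrow> 'm set \<Rightarrow> nat \<Rightarrow> ('m list \<Rightarrow> 'a) set" where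
  "ext_image_sub sc N r =
     module.span pscale ({ebas ys | ys. length ys = r \<and> set ys \<subseteq> N} \<union> ext_rels sc r)"

end

theory Submission
  imports Defs
begin


lemma permutes_lessThan_finite: "finite {p. p permutes {..<n::nat}}"
  by (rule finite_permutations) simp

lemma detn_cong: "(\<And>i c. i < n \<Longrightarrow> c < n \<Longrightarrow> A i c = A' i c) \<Longrightarrow> detn n A = detn n A'"
  unfolding detn_def
proof (intro sum.cong refl arg_cong2[where f="(*)"] prod.cong)
  fix p i assume h: "\<And>i c. i < n \<Longrightarrow> c < n \<Longrightarrow> A i c = A' i c" and p: "p \<in> {p. p permutes {..<n}}" and i: "i \<in> {..<n}"
  then have "p i < n" using permutes_in_image[of p "{..<n}" i] by auto
  then show "A i (p i) = A' i (p i)" using h i by auto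
qed

lemma detn_cols_perm:
  assumes r: "\<rho> permutes {..<n}"
  shows "detn n (\<lambda>i c. A i (\<rho> c)) = of_int (sign \<rho>) * detn n A"
proof -
  have pr: "permutation \<rho>" using r permutation_permutes by blast
  have "detn n (\<lambda>i c. A i (\<rho> c)) = (\<Sum>p | p permutes {..<n}. of_int (sign p) * (\<Prod>i<n. A i ((\<rho> \<circ> p) i)))"
    unfolding detn_def by simp
  also have "\<dots> = (\<Sum>q | q permutes {..<n}. of_int (sign \<rho>) * (of_int (sign q) * (\<Prod>i<n. A i (q i))))"
  proof (rule sum.reindex_bij_witness[where i="\<lambda>q. inv \<rho> \<circ> q" and j="\<lambda>p. \<rho> \<circ> p"])
    fix q assume q: "q \<in> {q. q permutes {..<n}}"
    show "\<rho> \<circ> (inv \<rho> \<circ> q) = q" using permutes_inverses(1)[OF r] by (simp add: fun_eq_iff)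
    show "inv \<rho> \<circ> q \<in> {p. p permutes {..<n}}" using q permutes_compose permutes_inv r by blast
  next
    fix p assume p: "p \<in> {p. p permutes {..<n}}"
    show "inv \<rho> \<circ> (\<rho> \<circ> p) = p" using permutes_inverses(2)[OF r] by (simp add: fun_eq_iff)
    show "\<rho> \<circ> p \<in> {p. p permutes {..<n}}" using p permutes_compose r by blast
    have qp: "permutation p" using p permutation_permutes by blast
    have "sign (\<rho> \<circ> p) = sign \<rho> * sign p"
      using pr qp by (simp add: sign_compose)
    then have "of_int (sign \<rho>) * of_int (sign (\<rho> \<circ> p)) = (of_int (sign p) :: 'a)"
      by (simp flip: of_int_mult add: mult.assoc[symmetric])
    then show "of_int (sign \<rho>) * (of_int (sign (\<rho> \<circ> p)) * (\<Prod>i<n. A i ((\<rho> \<circ> p) i))) =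
        of_int (sign p) * (\<Prod>i<n. A i ((\<rho> \<circ> p) i))" by (simp add: mult.assoc[symmetric])
  qed
  also have "\<dots> = of_int (sign \<rho>) * detn n A"
    unfolding detn_def by (simp add: sum_distrib_left)
  finally show ?thesis .
qed

lemma detn_identical_cols:
  assumes a: "a < n" and b: "b < n" and ab: "a \<noteq> b" and eq: "\<And>i. i < n \<Longrightarrow> A i a = A i b"
  shows "detn n (A :: nat \<Rightarrow> nat \<Rightarrow> 'a::comm_ring_1) = 0"
proof -
  let ?t = "Transposition.transpose a b"
  let ?P = "{p. p permutes {..<n}}"
  define F where "F = (\<lambda>p. (\<Prod>i<n. A i (p i)))"
  have tp: "?t permutes {..<n}" using a b by (intro permutes_swap_id) auto
  have Ft: "F (?t \<circ> p) = F p" if p: "p \<in> ?P" for p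
    unfolding F_def
  proof (rule prod.cong[OF refl])
    fix i assume i: "i \<in> {..<n}"
    show "A i ((?t \<circ> p) i) = A i (p i)"
      using eq[of i] i by (auto simp: Transposition.transpose_def)
  qed
  have ev: "evenperm (?t \<circ> p) = (\<not> evenperm p)" if p: "p \<in> ?P" for p
  proof -
    have "permutation ?t" "permutation p" using tp p permutation_permutes by blast+
    then show ?thesis using ab by (simp add: evenperm_comp evenperm_swap)
  qed
  have "detn n A = (\<Sum>p\<in>?P. if evenperm p then F p else - F p)"
    unfolding detn_def F_def by (intro sum.cong refl) (simp add: sign_def)
  also have "\<dots> = (\<Sum>p\<in>?P \<inter> {p. evenperm p}. F p) + (\<Sum>p\<in>?P \<inter> - {p. evenperm p}. - F p)"
    by (rule sum.If_cases) (rule permutes_lessThan_finite)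
  also have "(\<Sum>p\<in>?P \<inter> - {p. evenperm p}. - F p) = (\<Sum>p\<in>?P \<inter> {p. evenperm p}. - F p)"
  proof (rule sum.reindex_bij_witness[where i="\<lambda>p. ?t \<circ> p" and j="\<lambda>p. ?t \<circ> p"])
    fix p assume p: "p \<in> ?P \<inter> - {p. evenperm p}"
    show "?t \<circ> (?t \<circ> p) = p" by (simp add: fun_eq_iff)
    show "?t \<circ> p \<in> ?P \<inter> {p. evenperm p}" using p ev[of p] permutes_compose[OF _ tp] by auto
    show "- F (?t \<circ> p) = - F p" using Ft p by auto
  next
    fix p assume p: "p \<in> ?P \<inter> {p. evenperm p}"
    show "?t \<circ> (?t \<circ> p) = p" by (simp add: fun_eq_iff)
    show "?t \<circ> p \<in> ?P \<inter> - {p. evenperm p}" using p ev[of p] permutes_compose[OF _ tp] by auto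
  qed
  finally show ?thesis by (simp add: sum_negf)
qed



definition Dd :: "nat \<Rightarrow> nat \<Rightarrow> (nat \<Rightarrow> nat \<Rightarrow> 'a::comm_ring_1) \<Rightarrow> nat set \<Rightarrow> 'a" where
  "Dd n k A S = (\<Sum>p\<in>{p. p permutes {..<n} \<and> (\<forall>t<k. p (sorted_list_of_set S ! t) = t)}.
      of_int (sign p) * (\<Prod>i\<in>{..<n} - S. A i (p i)))"

definition mnr :: "nat \<Rightarrow> (nat \<Rightarrow> nat \<Rightarrow> 'a::comm_ring_1) \<Rightarrow> nat set \<Rightarrow> 'a" where
  "mnr k A S = (\<Sum>\<sigma>\<in>{\<sigma>. \<sigma> permutes {..<k}}. of_int (sign \<sigma>) * (\<Prod>t<k. A (sorted_list_of_set S ! t) (\<sigma> t)))"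

lemma sl_facts:
  fixes S :: "nat set"
  assumes "S \<subseteq> {..<n}" "card S = k"
  shows "finite S" "length (sorted_list_of_set S) = k" "distinct (sorted_list_of_set S)"
    "set (sorted_list_of_set S) = S" "bij_betw (\<lambda>t. sorted_list_of_set S ! t) {..<k} S"
proof -
  show f: "finite S" using assms(1) by (rule finite_subset) simp
  show l: "length (sorted_list_of_set S) = k" using assms(2) by (simp only: length_sorted_list_of_set)
  show d: "distinct (sorted_list_of_set S)" by simp
  show s: "set (sorted_list_of_set S) = S" using f by (rule set_sorted_list_of_set)
  show "bij_betw (\<lambda>t. sorted_list_of_set S ! t) {..<k} S"
    by (rule bij_betw_nth[OF d]) (simp_all only: l s)
qed

lemma KS:
  fixes S :: "nat set"
  assumes S: "S \<subseteq> {..<n}" "card S = k"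
    and p: "p permutes {..<n}" "\<forall>t<k. p (sorted_list_of_set S ! t) = t" and i: "i < n"
  shows "p i < k \<longleftrightarrow> i \<in> S"
proof
  assume iS: "i \<in> S"
  have "(\<lambda>t. sorted_list_of_set S ! t) ` {..<k} = S"
    using bij_betw_imp_surj_on[OF sl_facts(5)[OF S]] .
  then have "i \<in> (\<lambda>t. sorted_list_of_set S ! t) ` {..<k}" using iS by simp
  then obtain t where t: "t < k" "i = sorted_list_of_set S ! t" by auto
  then show "p i < k" using p by simp
next
  assume pi: "p i < k"
  have "p (sorted_list_of_set S ! (p i)) = p i" using p pi by simp
  then have e: "sorted_list_of_set S ! (p i) = i" using permutes_inj[OF p(1)] by (simp add: inj_eq)
  have "sorted_list_of_set S ! (p i) \<in> S"
    using bij_betw_apply[OF sl_facts(5)[OF S]] pi by simp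
  then show "i \<in> S" using e by simp
qed

lemma LAP:
  assumes kn: "k \<le> n"
  shows "(\<Sum>S\<in>{S. S \<subseteq> {..<n} \<and> card S = k}. Dd n k A S * mnr k A S) = detn n A"
proof -
  define Sets where "Sets = {S. S \<subseteq> {..<n} \<and> card S = k}"
  define PS where "PS = (\<lambda>S. {p. p permutes {..<n} \<and> (\<forall>t<k. p (sorted_list_of_set S ! t) = t)})"
  define Sg where "Sg = {\<sigma>. \<sigma> permutes {..<k}}"
  define G where "G = (\<lambda>(S, p, \<sigma>). (of_int (sign p) * (\<Prod>i\<in>{..<n} - S. A i (p i))) *
       (of_int (sign \<sigma>) * (\<Prod>t<k. A (sorted_list_of_set S ! t) (\<sigma> t))))"
  have fSets: "finite Sets" unfolding Sets_def
    by (rule finite_subset[of _ "Pow {..<n}"]) auto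
  have fPS: "finite (PS S)" for S unfolding PS_def
    by (rule finite_subset[OF _ permutes_lessThan_finite[of n]]) auto
  have fSg: "finite Sg" unfolding Sg_def by (rule permutes_lessThan_finite)
  have "(\<Sum>S\<in>Sets. Dd n k A S * mnr k A S) = (\<Sum>S\<in>Sets. \<Sum>p\<in>PS S. \<Sum>\<sigma>\<in>Sg. G (S, p, \<sigma>))"
    unfolding Dd_def mnr_def PS_def Sg_def G_def by (simp add: sum_product)
  also have "\<dots> = (\<Sum>S\<in>Sets. \<Sum>y\<in>PS S \<times> Sg. G (S, y))"
    by (intro sum.cong refl) (simp add: sum.cartesian_product split_def)
  also have "\<dots> = (\<Sum>x\<in>Sigma Sets (\<lambda>S. PS S \<times> Sg). G x)"
    by (subst sum.Sigma[OF fSets]) (use fPS fSg in \<open>auto simp: split_def\<close>)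
  also have "\<dots> = detn n A"
    unfolding detn_def
  proof (rule sum.reindex_bij_witness[where j="\<lambda>(S, p, \<sigma>). \<sigma> \<circ> p" and
        i="\<lambda>q. let S = {i. i < n \<and> q i < k}; \<sigma> = (\<lambda>t. if t < k then q (sorted_list_of_set S ! t) else t)
               in (S, inv \<sigma> \<circ> q, \<sigma>)"])
    fix x assume x: "x \<in> Sigma Sets (\<lambda>S. PS S \<times> Sg)"
    then obtain S p \<sigma> where xe: "x = (S, p, \<sigma>)" and S: "S \<subseteq> {..<n}" "card S = k"
      and p: "p permutes {..<n}" "\<forall>t<k. p (sorted_list_of_set S ! t) = t" and sg: "\<sigma> permutes {..<k}"
      unfolding Sets_def PS_def Sg_def by auto
    have sgn: "\<sigma> permutes {..<n}" using permutes_subset[OF sg] kn by auto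
    have sfix: "\<sigma> y = y" if "\<not> y < k" for y using sg that permutes_not_in by fastforce
    have sin: "\<sigma> y < k" if "y < k" for y using permutes_in_image[OF sg] that by auto
    have sk: "\<sigma> y < k \<longleftrightarrow> y < k" for y using sfix sin by (cases "y < k") auto
    have e1: "{i. i < n \<and> (\<sigma> \<circ> p) i < k} = S"
      using KS[OF S p] S(1) sk by auto
    have e2: "(\<lambda>t. if t < k then (\<sigma> \<circ> p) (sorted_list_of_set S ! t) else t) = \<sigma>"
      using p(2) sfix by (auto simp: fun_eq_iff)
    have e3: "inv \<sigma> \<circ> (\<sigma> \<circ> p) = p" using permutes_inverses(2)[OF sg] by (simp add: fun_eq_iff)
    show "(\<lambda>q. let S = {i. i < n \<and> q i < k}; \<sigma> = (\<lambda>t. if t < k then q (sorted_list_of_set S ! t) else t)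
               in (S, inv \<sigma> \<circ> q, \<sigma>)) ((\<lambda>(S, p, \<sigma>). \<sigma> \<circ> p) x) = x"
      unfolding xe by (simp only: case_prod_conv Let_def e1 e2 e3)
    show "(\<lambda>(S, p, \<sigma>). \<sigma> \<circ> p) x \<in> {p. p permutes {..<n}}"
      unfolding xe using permutes_compose[OF p(1) sgn] by simp
    have sgnc: "sign (\<sigma> \<circ> p) = sign \<sigma> * sign p"
    proof -
      have "permutation \<sigma>" "permutation p" using sg p(1) permutation_permutes by blast+
      then show ?thesis by (simp add: sign_compose)
    qed
    have split: "(\<Prod>i<n. A i ((\<sigma> \<circ> p) i)) = (\<Prod>i\<in>{..<n} - S. A i ((\<sigma> \<circ> p) i)) * (\<Prod>i\<in>S. A i ((\<sigma> \<circ> p) i))"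
      by (rule prod.subset_diff[OF S(1)]) simp
    have part1: "(\<Prod>i\<in>{..<n} - S. A i ((\<sigma> \<circ> p) i)) = (\<Prod>i\<in>{..<n} - S. A i (p i))"
    proof (rule prod.cong[OF refl])
      fix i assume "i \<in> {..<n} - S"
      then have "\<not> p i < k" using KS[OF S p, of i] by auto
      then show "A i ((\<sigma> \<circ> p) i) = A i (p i)" using sfix by simp
    qed
    have part2: "(\<Prod>i\<in>S. A i ((\<sigma> \<circ> p) i)) = (\<Prod>t<k. A (sorted_list_of_set S ! t) (\<sigma> t))"
    proof -
      have "(\<Prod>i\<in>S. A i ((\<sigma> \<circ> p) i)) = (\<Prod>t<k. A (sorted_list_of_set S ! t) ((\<sigma> \<circ> p) (sorted_list_of_set S ! t)))"
        by (rule prod.reindex_bij_betw[OF sl_facts(5)[OF S], symmetric])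
      also have "\<dots> = (\<Prod>t<k. A (sorted_list_of_set S ! t) (\<sigma> t))"
        using p(2) by (intro prod.cong refl) simp
      finally show ?thesis .
    qed
    show "of_int (sign ((\<lambda>(S, p, \<sigma>). \<sigma> \<circ> p) x)) * (\<Prod>i<n. A i ((\<lambda>(S, p, \<sigma>). \<sigma> \<circ> p) x i)) = G x"
    proof -
      have "of_int (sign (\<sigma> \<circ> p)) * (\<Prod>i<n. A i ((\<sigma> \<circ> p) i)) = (of_int (sign \<sigma>) * of_int (sign p)) *
          ((\<Prod>i\<in>{..<n} - S. A i (p i)) * (\<Prod>t<k. A (sorted_list_of_set S ! t) (\<sigma> t)))"
        by (simp only: sgnc split part1 part2 of_int_mult)
      then show ?thesis unfolding xe G_def by (simp add: mult_ac)
    qed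
  next
    fix q assume q: "q \<in> {p. p permutes {..<n}}"
    then have qp: "q permutes {..<n}" by simp
    define S where "S = {i. i < n \<and> q i < k}"
    define \<sigma> where "\<sigma> = (\<lambda>t. if t < k then q (sorted_list_of_set S ! t) else t)"
    have bq: "bij_betw q S {..<k}"
    proof -
      have "inj_on q S" using permutes_inj[OF qp] by (rule inj_on_subset) simp
      moreover have "q ` S = {..<k}"
      proof
        show "q ` S \<subseteq> {..<k}" unfolding S_def by blast
        show "{..<k} \<subseteq> q ` S"
        proof
          fix y assume y: "y \<in> {..<k}"
          then have "y \<in> {..<n}" using kn by simp
          then have "y \<in> q ` {..<n}" using permutes_image[OF qp] by simp
          then obtain i where i: "i < n" "q i = y" by blast
          then have "i \<in> S" using y unfolding S_def by simp
          then show "y \<in> q ` S" using i(2) by blast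
        qed
      qed
      ultimately show ?thesis unfolding bij_betw_def by blast
    qed
    have S: "S \<subseteq> {..<n}" "card S = k"
    proof -
      show "S \<subseteq> {..<n}" unfolding S_def by blast
      show "card S = k" using bij_betw_same_card[OF bq] by simp
    qed
    have bs: "bij_betw \<sigma> {..<k} {..<k}"
    proof -
      have "bij_betw (q \<circ> (\<lambda>t. sorted_list_of_set S ! t)) {..<k} {..<k}"
        by (rule bij_betw_trans[OF sl_facts(5)[OF S] bq])
      then show ?thesis by (rule bij_betw_cong[THEN iffD1, rotated]) (simp add: \<sigma>_def)
    qed
    have sg: "\<sigma> permutes {..<k}" by (rule bij_imp_permutes[OF bs]) (simp add: \<sigma>_def)
    have sgn: "\<sigma> permutes {..<n}" using permutes_subset[OF sg] kn by auto
    show "(\<lambda>(S, p, \<sigma>). \<sigma> \<circ> p)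
          ((\<lambda>q. let S = {i. i < n \<and> q i < k}; \<sigma> = (\<lambda>t. if t < k then q (sorted_list_of_set S ! t) else t)
               in (S, inv \<sigma> \<circ> q, \<sigma>)) q) = q"
      unfolding Let_def S_def[symmetric] \<sigma>_def[symmetric]
      using permutes_inverses(1)[OF sg] by (simp add: fun_eq_iff)
    have pS: "(inv \<sigma> \<circ> q) permutes {..<n}" using permutes_compose[OF qp permutes_inv[OF sgn]] .
    have pS2: "\<forall>t<k. (inv \<sigma> \<circ> q) (sorted_list_of_set S ! t) = t"
    proof (intro allI impI)
      fix t assume t: "t < k"
      have "q (sorted_list_of_set S ! t) = \<sigma> t" using t by (simp add: \<sigma>_def)
      then show "(inv \<sigma> \<circ> q) (sorted_list_of_set S ! t) = t" using permutes_inverses(2)[OF sg] by simp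
    qed
    show "(\<lambda>q. let S = {i. i < n \<and> q i < k}; \<sigma> = (\<lambda>t. if t < k then q (sorted_list_of_set S ! t) else t)
               in (S, inv \<sigma> \<circ> q, \<sigma>)) q \<in> Sigma Sets (\<lambda>S. PS S \<times> Sg)"
      unfolding Let_def S_def[symmetric] \<sigma>_def[symmetric]
      using S pS pS2 sg by (simp add: Sets_def PS_def Sg_def)
  qed
  finally show ?thesis unfolding Sets_def .
qed


lemma sl_lessThan: "sorted_list_of_set {..<k} = [0..<k]"
  by (simp add: lessThan_atLeast0)

lemma GL:
  fixes T :: "nat set" and A :: "nat \<Rightarrow> nat \<Rightarrow> 'a::comm_ring_1"
  assumes kn: "k \<le> n" and T: "T \<subseteq> {..<n}" "card T = k"
  shows "(\<Sum>S\<in>{S. S \<subseteq> {..<n} \<and> card S = k}. Dd n k A S *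
      (\<Sum>\<sigma>\<in>{\<sigma>. \<sigma> permutes {..<k}}. of_int (sign \<sigma>) *
         (\<Prod>t<k. A (sorted_list_of_set S ! t) (sorted_list_of_set T ! (\<sigma> t)))))
    = (if T = {..<k} then detn n A else 0)"
proof -
  define B where "B = (\<lambda>i c. if c < k then A i (sorted_list_of_set T ! c) else A i c)"
  have D: "Dd n k A S = Dd n k B S" if S: "S \<in> {S. S \<subseteq> {..<n} \<and> card S = k}" for S
    unfolding Dd_def
  proof (intro sum.cong refl arg_cong2[where f="(*)"] prod.cong)
    fix p i assume p: "p \<in> {p. p permutes {..<n} \<and> (\<forall>t<k. p (sorted_list_of_set S ! t) = t)}"
      and i: "i \<in> {..<n} - S"
    have "\<not> p i < k" using KS[of S n k p i] S p i by auto
    then show "A i (p i) = B i (p i)" unfolding B_def by simp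
  qed
  have M: "(\<Sum>\<sigma>\<in>{\<sigma>. \<sigma> permutes {..<k}}. of_int (sign \<sigma>) *
         (\<Prod>t<k. A (sorted_list_of_set S ! t) (sorted_list_of_set T ! (\<sigma> t)))) = mnr k B S" for S
    unfolding mnr_def
  proof (intro sum.cong refl arg_cong2[where f="(*)"] prod.cong)
    fix \<sigma> t assume s: "\<sigma> \<in> {\<sigma>. \<sigma> permutes {..<k}}" and t: "t \<in> {..<k}"
    have "\<sigma> t < k" using permutes_in_image[of \<sigma> "{..<k}" t] s t by simp
    then show "A (sorted_list_of_set S ! t) (sorted_list_of_set T ! (\<sigma> t)) = B (sorted_list_of_set S ! t) (\<sigma> t)"
      unfolding B_def by simp
  qed
  have "(\<Sum>S\<in>{S. S \<subseteq> {..<n} \<and> card S = k}. Dd n k A S *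
      (\<Sum>\<sigma>\<in>{\<sigma>. \<sigma> permutes {..<k}}. of_int (sign \<sigma>) *
         (\<Prod>t<k. A (sorted_list_of_set S ! t) (sorted_list_of_set T ! (\<sigma> t)))))
     = (\<Sum>S\<in>{S. S \<subseteq> {..<n} \<and> card S = k}. Dd n k B S * mnr k B S)"
    by (intro sum.cong refl) (simp only: D M)
  also have "\<dots> = detn n B" by (rule LAP[OF kn])
  also have "\<dots> = (if T = {..<k} then detn n A else 0)"
  proof (cases "T = {..<k}")
    case True
    have "detn n B = detn n A"
    proof (rule detn_cong)
      fix i c assume "i < n" "c < n"
      show "B i c = A i c" unfolding B_def True sl_lessThan by simp
    qed
    then show ?thesis using True by simp
  next
    case False
    have "\<not> T \<subseteq> {..<k}"
    proof
      assume "T \<subseteq> {..<k}"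
      then have "T = {..<k}" using T(2) by (intro card_subset_eq) simp_all
      then show False using False by simp
    qed
    then obtain c where c: "c \<in> T" "\<not> c < k" by blast
    have "c \<in> (\<lambda>t. sorted_list_of_set T ! t) ` {..<k}"
      using bij_betw_imp_surj_on[OF sl_facts(5)[OF T]] c(1) by simp
    then obtain t where t: "t < k" "sorted_list_of_set T ! t = c" by blast
    have cn: "c < n" using T c by blast
    have "detn n B = 0"
    proof (rule detn_identical_cols[of t n c])
      show "t < n" using t kn by simp
      show "c < n" by (rule cn)
      show "t \<noteq> c" using t c by auto
      fix i show "B i t = B i c" unfolding B_def using t c by simp
    qed
    then show ?thesis using False by simp
  qed
  finally show ?thesis .
qed


lemma sum_inj_split:
  fixes F :: "(nat \<Rightarrow> nat) \<Rightarrow> 'b::comm_monoid_add"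
  shows "(\<Sum>\<phi>\<in>{\<phi>\<in>PiE {..<k} (\<lambda>_. {..<n}). inj_on \<phi> {..<k}}. F \<phi>) =
    (\<Sum>T\<in>{T. T \<subseteq> {..<n} \<and> card T = k}. \<Sum>\<sigma>\<in>{\<sigma>. \<sigma> permutes {..<k}}.
        F (restrict (\<lambda>t. sorted_list_of_set T ! (\<sigma> t)) {..<k}))"
proof -
  define Sets where "Sets = {T :: nat set. T \<subseteq> {..<n} \<and> card T = k}"
  define Sg where "Sg = {\<sigma>. \<sigma> permutes {..<(k::nat)}}"
  have fSets: "finite Sets" unfolding Sets_def
    by (rule finite_subset[of _ "Pow {..<n}"]) auto
  have fSg: "finite Sg" unfolding Sg_def by (rule permutes_lessThan_finite)
  have "(\<Sum>T\<in>Sets. \<Sum>\<sigma>\<in>Sg. F (restrict (\<lambda>t. sorted_list_of_set T ! (\<sigma> t)) {..<k}))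
     = (\<Sum>x\<in>Sets \<times> Sg. F (restrict (\<lambda>t. sorted_list_of_set (fst x) ! (snd x t)) {..<k}))"
    by (simp add: sum.cartesian_product split_def)
  also have "\<dots> = (\<Sum>\<phi>\<in>{\<phi>\<in>PiE {..<k} (\<lambda>_. {..<n}). inj_on \<phi> {..<k}}. F \<phi>)"
  proof (rule sum.reindex_bij_witness[where j="\<lambda>x. restrict (\<lambda>t. sorted_list_of_set (fst x) ! (snd x t)) {..<k}" and
        i="\<lambda>\<phi>. (\<phi> ` {..<k}, \<lambda>t. if t < k then inv_into {..<k} (\<lambda>s. sorted_list_of_set (\<phi> ` {..<k}) ! s) (\<phi> t) else t)"])
    fix x assume x: "x \<in> Sets \<times> Sg"
    then obtain T \<sigma> where xe: "x = (T, \<sigma>)" and T: "T \<subseteq> {..<n}" "card T = k" and sg: "\<sigma> permutes {..<k}"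
      unfolding Sets_def Sg_def by blast
    have bT: "bij_betw (\<lambda>t. sorted_list_of_set T ! t) {..<k} T" by (rule sl_facts(5)[OF T])
    have sim: "\<sigma> ` {..<k} = {..<k}" by (rule permutes_image[OF sg])
    have sin: "\<sigma> t < k" if "t < k" for t using permutes_in_image[OF sg] that by simp
    have sfix: "\<sigma> t = t" if "\<not> t < k" for t using permutes_not_in[OF sg] that by simp
    let ?\<phi> = "restrict (\<lambda>t. sorted_list_of_set T ! (\<sigma> t)) {..<k}"
    have img: "?\<phi> ` {..<k} = T"
    proof -
      have "?\<phi> ` {..<k} = (\<lambda>t. sorted_list_of_set T ! t) ` (\<sigma> ` {..<k})" by (auto simp: image_iff)
      also have "\<dots> = T" unfolding sim using bij_betw_imp_surj_on[OF bT] .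
      finally show ?thesis .
    qed
    have inv: "(\<lambda>t. if t < k then inv_into {..<k} (\<lambda>s. sorted_list_of_set T ! s) (?\<phi> t) else t) = \<sigma>"
    proof
      fix t show "(if t < k then inv_into {..<k} (\<lambda>s. sorted_list_of_set T ! s) (?\<phi> t) else t) = \<sigma> t"
      proof (cases "t < k")
        case True
        have "inv_into {..<k} (\<lambda>s. sorted_list_of_set T ! s) (sorted_list_of_set T ! (\<sigma> t)) = \<sigma> t"
          by (rule inv_into_f_f) (use bij_betw_imp_inj_on[OF bT] sin[OF True] in auto)
        then show ?thesis using True by simp
      qed (simp add: sfix)
    qed
    show "(\<lambda>\<phi>. (\<phi> ` {..<k}, \<lambda>t. if t < k then inv_into {..<k} (\<lambda>s. sorted_list_of_set (\<phi> ` {..<k}) ! s) (\<phi> t) else t))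
        ((\<lambda>x. restrict (\<lambda>t. sorted_list_of_set (fst x) ! (snd x t)) {..<k}) x) = x"
      unfolding xe fst_conv snd_conv img inv ..
    have inj: "inj_on ?\<phi> {..<k}"
    proof (rule inj_onI)
      fix s t assume s: "s \<in> {..<k}" and t: "t \<in> {..<k}" and e: "?\<phi> s = ?\<phi> t"
      then have "sorted_list_of_set T ! (\<sigma> s) = sorted_list_of_set T ! (\<sigma> t)" by simp
      then have "\<sigma> s = \<sigma> t" using bij_betw_imp_inj_on[OF bT] sin s t by (auto dest: inj_onD)
      then show "s = t" using permutes_inj[OF sg] by (simp add: inj_eq)
    qed
    have pie: "?\<phi> \<in> PiE {..<k} (\<lambda>_. {..<n})"
    proof (rule restrict_PiE_iff[THEN iffD2], intro ballI)
      fix t assume t: "t \<in> {..<k}"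
      have "sorted_list_of_set T ! (\<sigma> t) \<in> T" using bij_betw_apply[OF bT] sin t by simp
      then show "sorted_list_of_set T ! (\<sigma> t) \<in> {..<n}" using T(1) by blast
    qed
    show "(\<lambda>x. restrict (\<lambda>t. sorted_list_of_set (fst x) ! (snd x t)) {..<k}) x
       \<in> {\<phi> \<in> PiE {..<k} (\<lambda>_. {..<n}). inj_on \<phi> {..<k}}"
      unfolding xe fst_conv snd_conv using pie inj by blast
    show "F ((\<lambda>x. restrict (\<lambda>t. sorted_list_of_set (fst x) ! (snd x t)) {..<k}) x) =
          F (restrict (\<lambda>t. sorted_list_of_set (fst x) ! (snd x t)) {..<k})" ..
  next
    fix \<phi> assume ph: "\<phi> \<in> {\<phi> \<in> PiE {..<k} (\<lambda>_. {..<n}). inj_on \<phi> {..<k}}"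
    then have pie: "\<phi> \<in> PiE {..<k} (\<lambda>_. {..<n})" and inj: "inj_on \<phi> {..<k}" by auto
    define T where "T = \<phi> ` {..<k}"
    define \<sigma> where "\<sigma> = (\<lambda>t. if t < k then inv_into {..<k} (\<lambda>s. sorted_list_of_set T ! s) (\<phi> t) else t)"
    have T: "T \<subseteq> {..<n}" "card T = k"
    proof -
      show "T \<subseteq> {..<n}" unfolding T_def using pie by (auto simp: PiE_def Pi_def)
      show "card T = k" unfolding T_def using card_image[OF inj] by simp
    qed
    have bT: "bij_betw (\<lambda>t. sorted_list_of_set T ! t) {..<k} T" by (rule sl_facts(5)[OF T])
    have bphi: "bij_betw \<phi> {..<k} T" unfolding T_def using inj by (simp add: bij_betw_def)
    have bs: "bij_betw \<sigma> {..<k} {..<k}"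
    proof -
      have "bij_betw (inv_into {..<k} (\<lambda>s. sorted_list_of_set T ! s) \<circ> \<phi>) {..<k} {..<k}"
        by (rule bij_betw_trans[OF bphi bij_betw_inv_into[OF bT]])
      then show ?thesis by (rule bij_betw_cong[THEN iffD1, rotated]) (simp add: \<sigma>_def)
    qed
    have sg: "\<sigma> permutes {..<k}" by (rule bij_imp_permutes[OF bs]) (simp add: \<sigma>_def)
    show "(\<phi> ` {..<k}, \<lambda>t. if t < k then inv_into {..<k} (\<lambda>s. sorted_list_of_set (\<phi> ` {..<k}) ! s) (\<phi> t) else t)
       \<in> Sets \<times> Sg"
      unfolding T_def[symmetric] \<sigma>_def[symmetric] using T sg by (simp add: Sets_def Sg_def)
    show "(\<lambda>x. restrict (\<lambda>t. sorted_list_of_set (fst x) ! (snd x t)) {..<k})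
        (\<phi> ` {..<k}, \<lambda>t. if t < k then inv_into {..<k} (\<lambda>s. sorted_list_of_set (\<phi> ` {..<k}) ! s) (\<phi> t) else t) = \<phi>"
      unfolding T_def[symmetric] \<sigma>_def[symmetric] fst_conv snd_conv
    proof
      fix t show "restrict (\<lambda>t. sorted_list_of_set T ! (\<sigma> t)) {..<k} t = \<phi> t"
      proof (cases "t < k")
        case True
        have "\<phi> t \<in> (\<lambda>s. sorted_list_of_set T ! s) ` {..<k}"
          using bij_betw_imp_surj_on[OF bT] True unfolding T_def by blast
        then have "sorted_list_of_set T ! (inv_into {..<k} (\<lambda>s. sorted_list_of_set T ! s) (\<phi> t)) = \<phi> t"
          by (rule f_inv_into_f)
        then show ?thesis using True by (simp add: \<sigma>_def)
      next
        case False
        then show ?thesis using pie by (simp add: PiE_def extensional_def)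
      qed
    qed
  qed
  finally show ?thesis unfolding Sets_def Sg_def ..
qed


lemma ex_perm_ext:
  fixes j :: "nat \<Rightarrow> nat"
  assumes inj: "inj_on j {..<k}" and sub: "j ` {..<k} \<subseteq> {..<n}" and kn: "k \<le> n"
  shows "\<exists>\<rho>. \<rho> permutes {..<n} \<and> (\<forall>t<k. \<rho> t = j t)"
proof -
  define U where "U = {k..<n}"
  define V where "V = {..<n} - j ` {..<k}"
  have cj: "card (j ` {..<k}) = k" using card_image[OF inj] by simp
  have cU: "card U = n - k" unfolding U_def by simp
  have cV: "card V = n - k" unfolding V_def using card_Diff_subset[OF _ sub] cj by simp
  obtain h where h: "bij_betw h U V"
    using finite_same_card_bij[of U V] cU cV unfolding U_def V_def by auto
  define \<rho> where "\<rho> = (\<lambda>t. if t < k then j t else if t < n then h t else t)"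
  have b1: "bij_betw \<rho> {..<k} (j ` {..<k})"
  proof -
    have "bij_betw j {..<k} (j ` {..<k})" using inj by (simp add: bij_betw_def)
    then show ?thesis by (rule bij_betw_cong[THEN iffD1, rotated]) (simp add: \<rho>_def)
  qed
  have b2: "bij_betw \<rho> U V"
    using h by (rule bij_betw_cong[THEN iffD1, rotated]) (simp add: \<rho>_def U_def)
  have "bij_betw \<rho> ({..<k} \<union> U) (j ` {..<k} \<union> V)"
    by (rule bij_betw_combine[OF b1 b2]) (auto simp: V_def)
  moreover have "{..<k} \<union> U = {..<n}" unfolding U_def using kn by auto
  moreover have "j ` {..<k} \<union> V = {..<n}" unfolding V_def using sub by auto
  ultimately have "bij_betw \<rho> {..<n} {..<n}" by simp
  then have "\<rho> permutes {..<n}" by (rule bij_imp_permutes) (use kn in \<open>simp add: \<rho>_def\<close>)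
  then show ?thesis by (intro exI[of _ \<rho>]) (simp add: \<rho>_def)
qed



lemma module_pscale: "module (pscale :: 'a::comm_ring_1 \<Rightarrow> ('i \<Rightarrow> 'a) \<Rightarrow> ('i \<Rightarrow> 'a))"
  by unfold_locales (auto simp: pscale_def fun_eq_iff algebra_simps)

global_interpretation pF: module "pscale :: 'a::comm_ring_1 \<Rightarrow> ('i \<Rightarrow> 'a) \<Rightarrow> ('i \<Rightarrow> 'a)"
  by (rule module_pscale)

lemma module_mult: "module ((*) :: 'a::comm_ring_1 \<Rightarrow> 'a \<Rightarrow> 'a)"
  by unfold_locales (auto simp: algebra_simps)

global_interpretation rM: module "(*) :: 'a::comm_ring_1 \<Rightarrow> 'a \<Rightarrow> 'a"
  by (rule module_mult)

lemma pscale_add_left: "pscale (a + b) f = pscale a f + pscale b f"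
  by (simp add: pF.scale_left_distrib)
lemma pscale_mult: "pscale (a * b) f = pscale a (pscale b f)"
  by simp

definition KK :: "('a::comm_ring_1 \<Rightarrow> 'm::ab_group_add \<Rightarrow> 'm) \<Rightarrow> nat \<Rightarrow> ('m list \<Rightarrow> 'a) set" where
  "KK sc r = pF.span (ext_rels sc r)"

context module
begin

lemma K_add: "length xs = r \<Longrightarrow> i < r \<Longrightarrow>
   ebas (xs[i := x + y]) - ebas (xs[i := x]) - ebas (xs[i := y]) \<in> KK scale r"
  unfolding KK_def ext_rels_def by (rule pF.span_base) blast

lemma K_scale: "length xs = r \<Longrightarrow> i < r \<Longrightarrow>
   ebas (xs[i := scale c x]) - pscale c (ebas (xs[i := x])) \<in> KK scale r"
  unfolding KK_def ext_rels_def by (rule pF.span_base) blast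

lemma K_rep: "length xs = r \<Longrightarrow> i < r \<Longrightarrow> j < r \<Longrightarrow> i \<noteq> j \<Longrightarrow> xs ! i = xs ! j \<Longrightarrow>
   ebas xs \<in> KK scale r"
  unfolding KK_def ext_rels_def by (rule pF.span_base) blast

lemma K_zero: "length xs = r \<Longrightarrow> i < r \<Longrightarrow> ebas (xs[i := 0]) \<in> KK scale r"
  using K_scale[of xs r i 0 0] by simp

lemma K_sum: assumes "finite L" "length xs = r" "i < r"
  shows "ebas (xs[i := (\<Sum>l\<in>L. scale (c l) (x l))]) - (\<Sum>l\<in>L. pscale (c l) (ebas (xs[i := x l]))) \<in> KK scale r"
  using assms(1)
proof (induction L rule: finite_induct)
  case empty
  then show ?case using K_zero[OF assms(2,3)] by simp
next
  case (insert a L)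
  have 1: "ebas (xs[i := scale (c a) (x a) + (\<Sum>l\<in>L. scale (c l) (x l))]) - ebas (xs[i := scale (c a) (x a)])
     - ebas (xs[i := (\<Sum>l\<in>L. scale (c l) (x l))]) \<in> KK scale r"
    by (rule K_add[OF assms(2,3)])
  have 2: "ebas (xs[i := scale (c a) (x a)]) - pscale (c a) (ebas (xs[i := x a])) \<in> KK scale r"
    by (rule K_scale[OF assms(2,3)])
  let ?s = "(\<Sum>l\<in>L. scale (c l) (x l))"
  have eq: "ebas (xs[i := (\<Sum>l\<in>insert a L. scale (c l) (x l))]) - (\<Sum>l\<in>insert a L. pscale (c l) (ebas (xs[i := x l])))
    = (ebas (xs[i := scale (c a) (x a) + ?s]) - ebas (xs[i := scale (c a) (x a)])
     - ebas (xs[i := ?s])) + (ebas (xs[i := scale (c a) (x a)]) - pscale (c a) (ebas (xs[i := x a])))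
     + (ebas (xs[i := ?s]) - (\<Sum>l\<in>L. pscale (c l) (ebas (xs[i := x l]))))"
    using insert.hyps by (simp add: algebra_simps)
  show ?case unfolding eq using 1 2 insert.IH unfolding KK_def by (intro pF.span_add)
qed

end

lemma K_span_add3: "a \<in> KK sc r \<Longrightarrow> b \<in> KK sc r \<Longrightarrow> c \<in> KK sc r \<Longrightarrow> a + b + c \<in> KK sc r"
  unfolding KK_def by (intro pF.span_add)
lemma K_span_add: "a \<in> KK sc r \<Longrightarrow> b \<in> KK sc r \<Longrightarrow> a + b \<in> KK sc r"
  unfolding KK_def by (intro pF.span_add)
lemma K_span_diff: "a \<in> KK sc r \<Longrightarrow> b \<in> KK sc r \<Longrightarrow> a - b \<in> KK sc r"
  unfolding KK_def by (intro pF.span_diff)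
lemma K_span_scale: "a \<in> KK sc r \<Longrightarrow> pscale c a \<in> KK sc r"
  unfolding KK_def by (intro pF.span_scale)
lemma K_span_sum: "(\<And>x. x \<in> A \<Longrightarrow> f x \<in> KK sc r) \<Longrightarrow> sum f A \<in> KK sc r"
  unfolding KK_def by (intro pF.span_sum)
lemma K_span_0: "0 \<in> KK sc r"
  unfolding KK_def by (intro pF.span_zero)


definition keq :: "('a::comm_ring_1 \<Rightarrow> 'm::ab_group_add \<Rightarrow> 'm) \<Rightarrow> nat \<Rightarrow> ('m list \<Rightarrow> 'a) \<Rightarrow> ('m list \<Rightarrow> 'a) \<Rightarrow> bool" where
  "keq sc r a b \<longleftrightarrow> a - b \<in> KK sc r"

lemma K_span_neg: "a \<in> KK sc r \<Longrightarrow> - a \<in> KK sc r"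
  unfolding KK_def by (intro pF.span_neg)
lemma keq_refl: "keq sc r a a" unfolding keq_def by (simp add: K_span_0)
lemma keq_sym: "keq sc r a b \<Longrightarrow> keq sc r b a" unfolding keq_def
  using K_span_neg by fastforce
lemma keq_trans[trans]: "keq sc r a b \<Longrightarrow> keq sc r b c \<Longrightarrow> keq sc r a c" unfolding keq_def
proof -
  assume "a - b \<in> KK sc r" "b - c \<in> KK sc r"
  then have "(a - b) + (b - c) \<in> KK sc r" by (rule K_span_add)
  then show "a - c \<in> KK sc r" by simp
qed
lemma keq_add: "keq sc r a b \<Longrightarrow> keq sc r c d \<Longrightarrow> keq sc r (a + c) (b + d)" unfolding keq_def
proof -
  assume "a - b \<in> KK sc r" "c - d \<in> KK sc r"
  then have "(a - b) + (c - d) \<in> KK sc r" by (rule K_span_add)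
  then show "a + c - (b + d) \<in> KK sc r" by (simp add: algebra_simps)
qed
lemma keq_scale: "keq sc r a b \<Longrightarrow> keq sc r (pscale c a) (pscale c b)" unfolding keq_def
proof -
  assume "a - b \<in> KK sc r"
  then have "pscale c (a - b) \<in> KK sc r" by (rule K_span_scale)
  then show "pscale c a - pscale c b \<in> KK sc r" by (simp add: pF.scale_right_diff_distrib)
qed
lemma keq_sum: "(\<And>x. x \<in> A \<Longrightarrow> keq sc r (f x) (g x)) \<Longrightarrow> keq sc r (sum f A) (sum g A)"
  unfolding keq_def
proof -
  assume "\<And>x. x \<in> A \<Longrightarrow> f x - g x \<in> KK sc r"
  then have "(\<Sum>x\<in>A. f x - g x) \<in> KK sc r" by (rule K_span_sum)
  then show "sum f A - sum g A \<in> KK sc r" by (simp add: sum_subtractf)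
qed
lemma keq_0: "a \<in> KK sc r \<Longrightarrow> keq sc r a 0" unfolding keq_def by simp
lemma keq_0D: "keq sc r a 0 \<Longrightarrow> a \<in> KK sc r" unfolding keq_def by simp

context module
begin

lemma K_add2: "length xs = r \<Longrightarrow> i < r \<Longrightarrow>
   ebas (xs[i := x + y]) - (ebas (xs[i := x]) + ebas (xs[i := y])) \<in> KK scale r"
  using K_add[of xs r i x y] by (simp add: diff_diff_eq)

lemma K_swap:
  assumes "length xs = r" "a < r" "b < r" "a \<noteq> b"
  shows "ebas (xs[a := u, b := v]) + ebas (xs[a := v, b := u]) \<in> KK scale r"
proof -
  have sw: "\<And>p q. xs[a := p, b := q] = xs[b := q, a := p]" using assms(4) by (simp add: list_update_swap)
  have l1: "length (xs[b := u + v]) = r" "length (xs[a := u]) = r" "length (xs[a := v]) = r"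
    using assms by auto
  have z: "keq scale r (ebas (xs[a := u + v, b := u + v])) 0"
    unfolding keq_def by simp (rule K_rep[of _ r a b], use assms in auto)
  have e1: "keq scale r (ebas (xs[a := u + v, b := u + v])) (ebas (xs[a := u, b := u + v]) + ebas (xs[a := v, b := u + v]))"
    unfolding keq_def using K_add2[OF l1(1) assms(2), of u v] by (simp add: sw)
  have e2: "keq scale r (ebas (xs[a := u, b := u + v])) (ebas (xs[a := u, b := u]) + ebas (xs[a := u, b := v]))"
    unfolding keq_def using K_add2[OF l1(2) assms(3), of u v] by simp
  have e3: "keq scale r (ebas (xs[a := v, b := u + v])) (ebas (xs[a := v, b := u]) + ebas (xs[a := v, b := v]))"
    unfolding keq_def using K_add2[OF l1(3) assms(3), of u v] by simp
  have z1: "keq scale r (ebas (xs[a := u, b := u])) 0"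
    unfolding keq_def by simp (rule K_rep[of _ r a b], use assms in auto)
  have z2: "keq scale r (ebas (xs[a := v, b := v])) 0"
    unfolding keq_def by simp (rule K_rep[of _ r a b], use assms in auto)
  have "keq scale r 0 (ebas (xs[a := u, b := u + v]) + ebas (xs[a := v, b := u + v]))"
    using keq_trans[OF keq_sym[OF z] e1] .
  also have "keq scale r (ebas (xs[a := u, b := u + v]) + ebas (xs[a := v, b := u + v]))
     ((ebas (xs[a := u, b := u]) + ebas (xs[a := u, b := v])) + (ebas (xs[a := v, b := u]) + ebas (xs[a := v, b := v])))"
    by (intro keq_add e2 e3)
  also have "keq scale r ((ebas (xs[a := u, b := u]) + ebas (xs[a := u, b := v])) + (ebas (xs[a := v, b := u]) + ebas (xs[a := v, b := v])))
     ((0 + ebas (xs[a := u, b := v])) + (ebas (xs[a := v, b := u]) + 0))"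
    by (intro keq_add z1 z2 keq_refl)
  finally have "keq scale r 0 (ebas (xs[a := u, b := v]) + ebas (xs[a := v, b := u]))" by simp
  then have "- (0 - (ebas (xs[a := u, b := v]) + ebas (xs[a := v, b := u]))) \<in> KK scale r"
    unfolding keq_def by (rule K_span_neg)
  then show ?thesis by (simp add: add.commute)
qed

lemma permute_list_transpose:
  assumes "a < length xs" "b < length xs"
  shows "permute_list (Transposition.transpose a b) xs = xs[a := xs ! b, b := xs ! a]"
  by (rule nth_equalityI) (use assms in \<open>auto simp: permute_list_def nth_list_update Transposition.transpose_def\<close>)

lemma K_transpose:
  assumes "length xs = r" "a < r" "b < r" "a \<noteq> b"
  shows "ebas (permute_list (Transposition.transpose a b) xs) + ebas xs \<in> KK scale r"
proof -
  have "xs = xs[a := xs ! a, b := xs ! b]" by simp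
  then have "ebas xs = ebas (xs[a := xs ! a, b := xs ! b])" by simp
  then show ?thesis using K_swap[OF assms, of "xs ! b" "xs ! a"] assms
    by (simp add: permute_list_transpose)
qed

lemma K_perm:
  assumes "p permutes {..<r}"
  shows "\<forall>xs. length xs = r \<longrightarrow> ebas (permute_list p xs) - pscale (of_int (sign p)) (ebas xs) \<in> KK scale r"
  using assms finite_lessThan
proof (induction p rule: permutes_induct)
  case id
  have "ebas (permute_list id xs) - pscale (of_int (sign id)) (ebas xs) = 0" for xs :: "'b list"
    by simp
  then show ?case using K_span_0 by metis
next
  case (swap a b p)
  show ?case
  proof (intro allI impI)
    fix xs :: "'b list" assume len: "length xs = r"
    let ?t = "Transposition.transpose a b"
    let ?xs' = "permute_list ?t xs"
    have len': "length ?xs' = r" using len by simp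
    have c: "permute_list (?t \<circ> p) xs = permute_list p ?xs'"
      by (rule permute_list_compose) (simp add: len \<open>p permutes {..<r}\<close>)
    have sg: "sign (?t \<circ> p) = - sign p"
    proof -
      have "?t permutes {..<r}" by (intro permutes_swap_id \<open>a \<in> {..<r}\<close> \<open>b \<in> {..<r}\<close>)
      then have "permutation ?t" "permutation p" using \<open>p permutes {..<r}\<close> permutation_permutes by blast+
      then show ?thesis using \<open>a \<noteq> b\<close> by (simp add: sign_compose sign_swap_id)
    qed
    have h1: "ebas (permute_list p ?xs') - pscale (of_int (sign p)) (ebas ?xs') \<in> KK scale r"
      using swap.IH len' by blast
    have h2: "pscale (of_int (sign p)) (ebas ?xs' + ebas xs) \<in> KK scale r"
      by (intro K_span_scale K_transpose) (use swap len in auto)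
    have eq: "ebas (permute_list (?t \<circ> p) xs) - pscale (of_int (sign (?t \<circ> p))) (ebas xs)
      = (ebas (permute_list p ?xs') - pscale (of_int (sign p)) (ebas ?xs')) + pscale (of_int (sign p)) (ebas ?xs' + ebas xs)"
      unfolding c sg by (simp add: pF.scale_right_distrib pF.scale_minus_left)
    show "ebas (permute_list (?t \<circ> p) xs) - pscale (of_int (sign (?t \<circ> p))) (ebas xs) \<in> KK scale r"
      unfolding eq by (intro K_span_add h1 h2)
  qed
qed


lemma K_multi:
  assumes "finite T" "finite L"
  shows "T \<subseteq> {..<r} \<Longrightarrow> length xs = r \<Longrightarrow>
    keq scale r (ebas (map (\<lambda>i. if i \<in> T then (\<Sum>l\<in>L. scale (B i l) (h i l)) else xs ! i) [0..<r]))
      (\<Sum>\<phi>\<in>PiE T (\<lambda>_. L). pscale (\<Prod>i\<in>T. B i (\<phi> i)) (ebas (map (\<lambda>i. if i \<in> T then h i (\<phi> i) else xs ! i) [0..<r])))"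
  using assms(1)
proof (induction T arbitrary: xs rule: finite_induct)
  case empty
  have "map (\<lambda>i. xs ! i) [0..<r] = xs" using empty.prems by (metis map_nth)
  then show ?case by (simp add: keq_refl)
next
  case (insert a T)
  have a: "a < r" using insert by auto
  let ?S = "\<Sum>l\<in>L. scale (B a l) (h a l)"
  define xs' where "xs' = xs[a := ?S]"
  have len': "length xs' = r" using insert by (simp add: xs'_def)
  define zs where "zs = (\<lambda>\<phi>. map (\<lambda>i. if i \<in> T then h i (\<phi> i) else xs ! i) [0..<r])"
  have lenz: "length (zs \<phi>) = r" for \<phi> by (simp add: zs_def)
  have e0: "map (\<lambda>i. if i \<in> insert a T then (\<Sum>l\<in>L. scale (B i l) (h i l)) else xs ! i) [0..<r]
     = map (\<lambda>i. if i \<in> T then (\<Sum>l\<in>L. scale (B i l) (h i l)) else xs' ! i) [0..<r]"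
  proof (intro map_cong refl)
    fix i assume "i \<in> set [0..<r]"
    then have i: "i < r" by simp
    show "(if i \<in> insert a T then (\<Sum>l\<in>L. scale (B i l) (h i l)) else xs ! i) =
          (if i \<in> T then (\<Sum>l\<in>L. scale (B i l) (h i l)) else xs' ! i)"
      using insert.hyps(2) insert.prems(2) i by (cases "i = a") (simp_all add: xs'_def)
  qed
  have e1: "map (\<lambda>i. if i \<in> T then h i (\<phi> i) else xs' ! i) [0..<r] = (zs \<phi>)[a := ?S]" for \<phi>
  proof (rule nth_equalityI)
    show "length (map (\<lambda>i. if i \<in> T then h i (\<phi> i) else xs' ! i) [0..<r]) = length ((zs \<phi>)[a := ?S])"
      by (simp add: zs_def)
    fix i assume "i < length (map (\<lambda>i. if i \<in> T then h i (\<phi> i) else xs' ! i) [0..<r])"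
    then have i: "i < r" by simp
    show "map (\<lambda>i. if i \<in> T then h i (\<phi> i) else xs' ! i) [0..<r] ! i = (zs \<phi>)[a := ?S] ! i"
      using insert.hyps(2) insert.prems(2) i a by (cases "i = a") (simp_all add: xs'_def zs_def)
  qed
  have "keq scale r (ebas (map (\<lambda>i. if i \<in> insert a T then (\<Sum>l\<in>L. scale (B i l) (h i l)) else xs ! i) [0..<r]))
     (\<Sum>\<phi>\<in>PiE T (\<lambda>_. L). pscale (\<Prod>i\<in>T. B i (\<phi> i)) (ebas ((zs \<phi>)[a := ?S])))"
  proof -
    have ih: "keq scale r (ebas (map (\<lambda>i. if i \<in> T then (\<Sum>l\<in>L. scale (B i l) (h i l)) else xs' ! i) [0..<r]))
      (\<Sum>\<phi>\<in>PiE T (\<lambda>_. L). pscale (\<Prod>i\<in>T. B i (\<phi> i)) (ebas (map (\<lambda>i. if i \<in> T then h i (\<phi> i) else xs' ! i) [0..<r])))"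
      by (rule insert.IH) (use insert.prems len' in auto)
    show ?thesis unfolding e0 e1[symmetric] by (rule ih)
  qed
  also have "keq scale r (\<Sum>\<phi>\<in>PiE T (\<lambda>_. L). pscale (\<Prod>i\<in>T. B i (\<phi> i)) (ebas ((zs \<phi>)[a := ?S])))
      (\<Sum>\<phi>\<in>PiE T (\<lambda>_. L). pscale (\<Prod>i\<in>T. B i (\<phi> i)) (\<Sum>l\<in>L. pscale (B a l) (ebas ((zs \<phi>)[a := h a l]))))"
    by (intro keq_sum keq_scale) (unfold keq_def, rule K_sum[OF assms(2) lenz a])
  also have "(\<Sum>\<phi>\<in>PiE T (\<lambda>_. L). pscale (\<Prod>i\<in>T. B i (\<phi> i)) (\<Sum>l\<in>L. pscale (B a l) (ebas ((zs \<phi>)[a := h a l]))))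
     = (\<Sum>\<phi>\<in>PiE T (\<lambda>_. L). \<Sum>l\<in>L. pscale (B a l * (\<Prod>i\<in>T. B i (\<phi> i))) (ebas ((zs \<phi>)[a := h a l])))"
    by (simp add: pF.scale_sum_right mult.commute)
  also have "\<dots> = (\<Sum>(l, \<phi>)\<in>L \<times> PiE T (\<lambda>_. L). pscale (B a l * (\<Prod>i\<in>T. B i (\<phi> i))) (ebas ((zs \<phi>)[a := h a l])))"
    by (subst sum.swap) (simp add: sum.cartesian_product)
  also have "\<dots> = (\<Sum>\<psi>\<in>PiE (insert a T) (\<lambda>_. L). pscale (\<Prod>i\<in>insert a T. B i (\<psi> i))
        (ebas (map (\<lambda>i. if i \<in> insert a T then h i (\<psi> i) else xs ! i) [0..<r])))"
  proof -
    have inj: "inj_on (\<lambda>(y, g). g(a := y)) (L \<times> PiE T (\<lambda>_. L))"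
      using inj_combinator[OF insert.hyps(2), of "\<lambda>_. L"] by simp
    define F where "F = (\<lambda>\<psi>. pscale (\<Prod>i\<in>insert a T. B i (\<psi> i))
        (ebas (map (\<lambda>i. if i \<in> insert a T then h i (\<psi> i) else xs ! i) [0..<r])))"
    have r1: "(\<Sum>\<psi>\<in>PiE (insert a T) (\<lambda>_. L). F \<psi>) = (\<Sum>x\<in>L \<times> PiE T (\<lambda>_. L). (F \<circ> (\<lambda>(y, g). g(a := y))) x)"
      unfolding PiE_insert_eq by (rule sum.reindex[OF inj])
    have r2: "(\<Sum>x\<in>L \<times> PiE T (\<lambda>_. L). (F \<circ> (\<lambda>(y, g). g(a := y))) x) =
       (\<Sum>(l, \<phi>)\<in>L \<times> PiE T (\<lambda>_. L). pscale (B a l * (\<Prod>i\<in>T. B i (\<phi> i))) (ebas ((zs \<phi>)[a := h a l])))"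
    proof (rule sum.cong[OF refl])
      fix x assume "x \<in> L \<times> PiE T (\<lambda>_. L)"
      then obtain l \<phi> where x: "x = (l, \<phi>)" by blast
      have p: "(\<Prod>i\<in>insert a T. B i ((\<phi>(a := l)) i)) = B a l * (\<Prod>i\<in>T. B i (\<phi> i))"
      proof -
        have "(\<Prod>i\<in>T. B i ((\<phi>(a := l)) i)) = (\<Prod>i\<in>T. B i (\<phi> i))"
          by (rule prod.cong) (use insert.hyps in auto)
        then show ?thesis using insert.hyps by simp
      qed
      have m: "map (\<lambda>i. if i \<in> insert a T then h i ((\<phi>(a := l)) i) else xs ! i) [0..<r] = (zs \<phi>)[a := h a l]"
      proof (rule nth_equalityI)
        fix i assume "i < length (map (\<lambda>i. if i \<in> insert a T then h i ((\<phi>(a := l)) i) else xs ! i) [0..<r])"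
        then have i: "i < r" by simp
        show "map (\<lambda>i. if i \<in> insert a T then h i ((\<phi>(a := l)) i) else xs ! i) [0..<r] ! i = (zs \<phi>)[a := h a l] ! i"
          using insert.hyps(2) i a by (cases "i = a") (simp_all add: zs_def)
      qed (simp add: zs_def)
      show "(F \<circ> (\<lambda>(y, g). g(a := y))) x =
         (case x of (l, \<phi>) \<Rightarrow> pscale (B a l * (\<Prod>i\<in>T. B i (\<phi> i))) (ebas ((zs \<phi>)[a := h a l])))"
        unfolding x comp_def case_prod_conv F_def p m ..
    qed
    show ?thesis using r1 r2 unfolding F_def by simp
  qed
  finally show ?case .
qed


lemma list_prefix_eq:
  assumes "length X = k" "length Y = r - k" "k \<le> r"
  shows "map (\<lambda>i. if i < k then z i else (X @ Y) ! i) [0..<r] = map z [0..<k] @ Y"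
proof (rule nth_equalityI)
  show "length (map (\<lambda>i. if i < k then z i else (X @ Y) ! i) [0..<r]) = length (map z [0..<k] @ Y)"
    using assms by simp
  fix i assume "i < length (map (\<lambda>i. if i < k then z i else (X @ Y) ! i) [0..<r])"
  then have i: "i < r" by simp
  show "map (\<lambda>i. if i < k then z i else (X @ Y) ! i) [0..<r] ! i = (map z [0..<k] @ Y) ! i"
    using assms i by (cases "i < k") (simp_all add: nth_append)
qed

lemma ebas_permute:
  assumes sg: "\<sigma> permutes {..<k}" and len: "length Y = r - k" "k \<le> r"
  shows "ebas (map (\<lambda>t. z (\<sigma> t)) [0..<k] @ Y) = ebas (permute_list \<sigma> (map z [0..<k] @ Y))"
proof -
  have "map (\<lambda>t. z (\<sigma> t)) [0..<k] @ Y = permute_list \<sigma> (map z [0..<k] @ Y)"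
  proof (rule nth_equalityI)
    show "length (map (\<lambda>t. z (\<sigma> t)) [0..<k] @ Y) = length (permute_list \<sigma> (map z [0..<k] @ Y))" by simp
    fix i assume "i < length (map (\<lambda>t. z (\<sigma> t)) [0..<k] @ Y)"
    then have i: "i < r" using len by simp
    have sin: "\<sigma> t < k" if "t < k" for t using permutes_in_image[OF sg] that by simp
    have sfix: "\<sigma> t = t" if "\<not> t < k" for t using permutes_not_in[OF sg] that by simp
    show "(map (\<lambda>t. z (\<sigma> t)) [0..<k] @ Y) ! i = permute_list \<sigma> (map z [0..<k] @ Y) ! i"
      using i len sin sfix by (cases "i < k") (simp_all add: nth_append permute_list_def)
  qed
  then show ?thesis by simp
qed

lemma core:
  assumes N: "subspace N"
    and rel: "\<And>i. i < n \<Longrightarrow> (\<Sum>l<n. scale (A i l) (g l)) \<in> N"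
    and kn: "k \<le> n" and Y: "set Y \<subseteq> N" and r: "r = k + length Y"
  shows "pscale (detn n A) (ebas (map g [0..<k] @ Y)) \<in> ext_image_sub scale N r"
proof -
  define E where "E = ext_image_sub scale N r"
  have KE: "KK scale r \<subseteq> E" unfolding E_def KK_def ext_image_sub_def by (rule pF.span_mono) blast
  define f where "f = (\<lambda>i. \<Sum>l<n. scale (A i l) (g l))"
  define w where "w = (\<lambda>z. ebas (map z [0..<k] @ Y) :: 'b list \<Rightarrow> 'a)"
  define Sets where "Sets = {S :: nat set. S \<subseteq> {..<n} \<and> card S = k}"
  define Sg where "Sg = {\<sigma>. \<sigma> permutes {..<(k::nat)}}"
  define PP where "PP = PiE {..<k} (\<lambda>_. {..<n::nat})"
  define c where "c = (\<lambda>\<phi>. \<Sum>S\<in>Sets. Dd n k A S * (\<Prod>t<k. A (sorted_list_of_set S ! t) (\<phi> t)))"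
  define R where "R = (\<Sum>S\<in>Sets. pscale (Dd n k A S) (w (\<lambda>t. f (sorted_list_of_set S ! t))))"
  have lenY: "length Y = r - k" "k \<le> r" using r by auto
  have fSets: "finite Sets" unfolding Sets_def
    by (rule finite_subset[of _ "Pow {..<n}"]) auto
  have fSg: "finite Sg" unfolding Sg_def by (rule permutes_lessThan_finite)
  have fPP: "finite PP" unfolding PP_def by (intro finite_PiE) auto
  have RE: "R \<in> E" unfolding R_def E_def ext_image_sub_def
  proof (intro pF.span_sum pF.span_scale pF.span_base UnI1 CollectI exI conjI)
    fix S assume S: "S \<in> Sets"
    show "w (\<lambda>t. f (sorted_list_of_set S ! t)) = ebas (map (\<lambda>t. f (sorted_list_of_set S ! t)) [0..<k] @ Y)"
      unfolding w_def ..
    show "length (map (\<lambda>t. f (sorted_list_of_set S ! t)) [0..<k] @ Y) = r" using r by simp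
    have "f (sorted_list_of_set S ! t) \<in> N" if t: "t < k" for t
    proof -
      have "sorted_list_of_set S ! t \<in> S" using bij_betw_apply[OF sl_facts(5)] S t unfolding Sets_def by blast
      then have "sorted_list_of_set S ! t < n" using S unfolding Sets_def by blast
      then show ?thesis unfolding f_def by (rule rel)
    qed
    then show "set (map (\<lambda>t. f (sorted_list_of_set S ! t)) [0..<k] @ Y) \<subseteq> N" using Y by auto
  qed
  have step1: "keq scale r (w (\<lambda>t. f (sorted_list_of_set S ! t)))
     (\<Sum>\<phi>\<in>PP. pscale (\<Prod>t<k. A (sorted_list_of_set S ! t) (\<phi> t)) (w (\<lambda>t. g (\<phi> t))))" for S
  proof -
    let ?X = "map g [0..<k]"
    have lX: "length (?X @ Y) = r" using r by simp
    have m1: "map (\<lambda>i. if i \<in> {..<k} then (\<Sum>l\<in>{..<n}. scale (A (sorted_list_of_set S ! i) l) (g l)) else (?X @ Y) ! i) [0..<r]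
        = map (\<lambda>t. f (sorted_list_of_set S ! t)) [0..<k] @ Y"
      using list_prefix_eq[of ?X k Y r "\<lambda>t. \<Sum>l<n. scale (A (sorted_list_of_set S ! t) l) (g l)"] lenY by (simp add: f_def)
    have m2: "map (\<lambda>i. if i \<in> {..<k} then g (\<phi> i) else (?X @ Y) ! i) [0..<r] = map (\<lambda>t. g (\<phi> t)) [0..<k] @ Y" for \<phi>
      using list_prefix_eq[of ?X k Y r "\<lambda>t. g (\<phi> t)"] lenY by simp
    show ?thesis
      using K_multi[of "{..<k}" "{..<n}" r "?X @ Y" "\<lambda>t l. A (sorted_list_of_set S ! t) l" "\<lambda>t l. g l"] lenY lX
      unfolding m1 m2 w_def PP_def by simp
  qed
  have "keq scale r R (\<Sum>S\<in>Sets. pscale (Dd n k A S)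
      (\<Sum>\<phi>\<in>PP. pscale (\<Prod>t<k. A (sorted_list_of_set S ! t) (\<phi> t)) (w (\<lambda>t. g (\<phi> t)))))"
    unfolding R_def by (intro keq_sum keq_scale step1)
  also have "(\<Sum>S\<in>Sets. pscale (Dd n k A S)
      (\<Sum>\<phi>\<in>PP. pscale (\<Prod>t<k. A (sorted_list_of_set S ! t) (\<phi> t)) (w (\<lambda>t. g (\<phi> t)))))
    = (\<Sum>\<phi>\<in>PP. pscale (c \<phi>) (w (\<lambda>t. g (\<phi> t))))"
  proof -
    have "(\<Sum>S\<in>Sets. pscale (Dd n k A S)
      (\<Sum>\<phi>\<in>PP. pscale (\<Prod>t<k. A (sorted_list_of_set S ! t) (\<phi> t)) (w (\<lambda>t. g (\<phi> t)))))
      = (\<Sum>S\<in>Sets. \<Sum>\<phi>\<in>PP. pscale (Dd n k A S * (\<Prod>t<k. A (sorted_list_of_set S ! t) (\<phi> t))) (w (\<lambda>t. g (\<phi> t))))"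
      by (simp add: pF.scale_sum_right)
    also have "\<dots> = (\<Sum>\<phi>\<in>PP. \<Sum>S\<in>Sets. pscale (Dd n k A S * (\<Prod>t<k. A (sorted_list_of_set S ! t) (\<phi> t))) (w (\<lambda>t. g (\<phi> t))))"
      by (rule sum.swap)
    also have "\<dots> = (\<Sum>\<phi>\<in>PP. pscale (c \<phi>) (w (\<lambda>t. g (\<phi> t))))"
      unfolding c_def by (simp add: pF.scale_sum_left)
    finally show ?thesis .
  qed
  also have "(\<Sum>\<phi>\<in>PP. pscale (c \<phi>) (w (\<lambda>t. g (\<phi> t)))) =
     (\<Sum>\<phi>\<in>PP \<inter> {\<phi>. inj_on \<phi> {..<k}}. pscale (c \<phi>) (w (\<lambda>t. g (\<phi> t)))) +
     (\<Sum>\<phi>\<in>PP - {\<phi>. inj_on \<phi> {..<k}}. pscale (c \<phi>) (w (\<lambda>t. g (\<phi> t))))"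
    by (rule sum.Int_Diff[OF fPP])
  also have "keq scale r ((\<Sum>\<phi>\<in>PP \<inter> {\<phi>. inj_on \<phi> {..<k}}. pscale (c \<phi>) (w (\<lambda>t. g (\<phi> t)))) +
     (\<Sum>\<phi>\<in>PP - {\<phi>. inj_on \<phi> {..<k}}. pscale (c \<phi>) (w (\<lambda>t. g (\<phi> t)))))
     ((\<Sum>\<phi>\<in>PP \<inter> {\<phi>. inj_on \<phi> {..<k}}. pscale (c \<phi>) (w (\<lambda>t. g (\<phi> t)))) + 0)"
  proof (intro keq_add keq_refl keq_0 K_span_sum K_span_scale)
    fix \<phi> assume "\<phi> \<in> PP - {\<phi>. inj_on \<phi> {..<k}}"
    then have "\<not> inj_on \<phi> {..<k}" by simp
    then obtain s t where st: "s < k" "t < k" "s \<noteq> t" "\<phi> s = \<phi> t" unfolding inj_on_def by auto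
    show "w (\<lambda>t. g (\<phi> t)) \<in> KK scale r" unfolding w_def
      by (rule K_rep[of _ r s t]) (use st r in \<open>simp_all add: nth_append\<close>)
  qed
  also have "(\<Sum>\<phi>\<in>PP \<inter> {\<phi>. inj_on \<phi> {..<k}}. pscale (c \<phi>) (w (\<lambda>t. g (\<phi> t)))) + 0 =
     (\<Sum>T\<in>Sets. \<Sum>\<sigma>\<in>Sg. pscale (c (restrict (\<lambda>t. sorted_list_of_set T ! (\<sigma> t)) {..<k}))
         (w (\<lambda>t. g (restrict (\<lambda>t. sorted_list_of_set T ! (\<sigma> t)) {..<k} t))))"
  proof -
    have eqs: "PP \<inter> {\<phi>. inj_on \<phi> {..<k}} = {\<phi>\<in>PiE {..<k} (\<lambda>_. {..<n}). inj_on \<phi> {..<k}}"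
      unfolding PP_def by blast
    show ?thesis unfolding add_0_right eqs Sets_def Sg_def by (rule sum_inj_split)
  qed
  also have "keq scale r (\<Sum>T\<in>Sets. \<Sum>\<sigma>\<in>Sg. pscale (c (restrict (\<lambda>t. sorted_list_of_set T ! (\<sigma> t)) {..<k}))
         (w (\<lambda>t. g (restrict (\<lambda>t. sorted_list_of_set T ! (\<sigma> t)) {..<k} t))))
      (\<Sum>T\<in>Sets. \<Sum>\<sigma>\<in>Sg. pscale (c (restrict (\<lambda>t. sorted_list_of_set T ! (\<sigma> t)) {..<k}))
         (pscale (of_int (sign \<sigma>)) (w (\<lambda>t. g (sorted_list_of_set T ! t)))))"
  proof (intro keq_sum keq_scale)
    fix T \<sigma> assume T: "T \<in> Sets" and sg: "\<sigma> \<in> Sg"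
    have sg': "\<sigma> permutes {..<k}" using sg unfolding Sg_def by simp
    have sgr: "\<sigma> permutes {..<r}" using permutes_subset[OF sg'] lenY(2) by simp
    have e: "w (\<lambda>t. g (restrict (\<lambda>t. sorted_list_of_set T ! (\<sigma> t)) {..<k} t)) =
        ebas (permute_list \<sigma> (map (\<lambda>t. g (sorted_list_of_set T ! t)) [0..<k] @ Y))"
    proof -
      have m: "map (\<lambda>t. g (restrict (\<lambda>t. sorted_list_of_set T ! (\<sigma> t)) {..<k} t)) [0..<k] =
          map (\<lambda>t. g (sorted_list_of_set T ! (\<sigma> t))) [0..<k]" by (intro map_cong refl) simp
      show ?thesis unfolding w_def m by (rule ebas_permute[OF sg' lenY, of "\<lambda>t. g (sorted_list_of_set T ! t)"])
    qed
    have len: "length (map (\<lambda>t. g (sorted_list_of_set T ! t)) [0..<k] @ Y) = r" using r by simp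
    show "keq scale r (w (\<lambda>t. g (restrict (\<lambda>t. sorted_list_of_set T ! (\<sigma> t)) {..<k} t)))
        (pscale (of_int (sign \<sigma>)) (w (\<lambda>t. g (sorted_list_of_set T ! t))))"
      unfolding keq_def w_def e[unfolded w_def] by (rule K_perm[OF sgr, rule_format, OF len])
  qed
  also have "(\<Sum>T\<in>Sets. \<Sum>\<sigma>\<in>Sg. pscale (c (restrict (\<lambda>t. sorted_list_of_set T ! (\<sigma> t)) {..<k}))
         (pscale (of_int (sign \<sigma>)) (w (\<lambda>t. g (sorted_list_of_set T ! t)))))
     = (\<Sum>T\<in>Sets. pscale (\<Sum>\<sigma>\<in>Sg. of_int (sign \<sigma>) * c (restrict (\<lambda>t. sorted_list_of_set T ! (\<sigma> t)) {..<k}))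
         (w (\<lambda>t. g (sorted_list_of_set T ! t))))"
    by (simp add: pF.scale_sum_left mult.commute)
  also have "\<dots> = (\<Sum>T\<in>Sets. pscale (if T = {..<k} then detn n A else 0) (w (\<lambda>t. g (sorted_list_of_set T ! t))))"
  proof (rule sum.cong[OF refl])
    fix T assume T: "T \<in> Sets"
    have cr: "c (restrict (\<lambda>t. sorted_list_of_set T ! (\<sigma> t)) {..<k}) =
        (\<Sum>S\<in>Sets. Dd n k A S * (\<Prod>t<k. A (sorted_list_of_set S ! t) (sorted_list_of_set T ! (\<sigma> t))))" for \<sigma>
      unfolding c_def by (intro sum.cong refl arg_cong2[where f="(*)"] prod.cong) simp_all
    have "(\<Sum>\<sigma>\<in>Sg. of_int (sign \<sigma>) * c (restrict (\<lambda>t. sorted_list_of_set T ! (\<sigma> t)) {..<k}))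
       = (\<Sum>\<sigma>\<in>Sg. \<Sum>S\<in>Sets. of_int (sign \<sigma>) * (Dd n k A S * (\<Prod>t<k. A (sorted_list_of_set S ! t) (sorted_list_of_set T ! (\<sigma> t)))))"
      unfolding cr by (simp only: sum_distrib_left)
    also have "\<dots> = (\<Sum>S\<in>Sets. \<Sum>\<sigma>\<in>Sg. of_int (sign \<sigma>) * (Dd n k A S * (\<Prod>t<k. A (sorted_list_of_set S ! t) (sorted_list_of_set T ! (\<sigma> t)))))"
      by (rule sum.swap)
    also have "\<dots> = (\<Sum>S\<in>Sets. Dd n k A S * (\<Sum>\<sigma>\<in>Sg. of_int (sign \<sigma>) * (\<Prod>t<k. A (sorted_list_of_set S ! t) (sorted_list_of_set T ! (\<sigma> t)))))"
      by (simp only: sum_distrib_left mult.left_commute)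
    also have "\<dots> = (if T = {..<k} then detn n A else 0)"
      unfolding Sets_def Sg_def by (rule GL[OF kn]) (use T in \<open>simp_all add: Sets_def\<close>)
    finally have "(\<Sum>\<sigma>\<in>Sg. of_int (sign \<sigma>) * c (restrict (\<lambda>t. sorted_list_of_set T ! (\<sigma> t)) {..<k}))
       = (if T = {..<k} then detn n A else 0)" .
    then show "pscale (\<Sum>\<sigma>\<in>Sg. of_int (sign \<sigma>) * c (restrict (\<lambda>t. sorted_list_of_set T ! (\<sigma> t)) {..<k}))
         (w (\<lambda>t. g (sorted_list_of_set T ! t))) =
       pscale (if T = {..<k} then detn n A else 0) (w (\<lambda>t. g (sorted_list_of_set T ! t)))" by (rule arg_cong)
  qed
  also have "\<dots> = pscale (detn n A) (w g)"
  proof -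
    have kS: "{..<k} \<in> Sets" unfolding Sets_def using kn by auto
    have "(\<Sum>T\<in>Sets. pscale (if T = {..<k} then detn n A else 0) (w (\<lambda>t. g (sorted_list_of_set T ! t))))
        = (\<Sum>T\<in>Sets. if T = {..<k} then pscale (detn n A) (w (\<lambda>t. g (sorted_list_of_set T ! t))) else 0)"
      by (intro sum.cong refl) simp
    also have "\<dots> = (if {..<k} \<in> Sets then pscale (detn n A) (w (\<lambda>t. g (sorted_list_of_set {..<k} ! t))) else 0)"
      by (rule sum.delta[OF fSets])
    also have "\<dots> = pscale (detn n A) (w (\<lambda>t. g (sorted_list_of_set {..<k} ! t)))"
      using kS by (simp only: if_True)
    also have "w (\<lambda>t. g (sorted_list_of_set {..<k} ! t)) = w g"
    proof -
      have m: "map (\<lambda>t. g ([0..<k] ! t)) [0..<k] = map g [0..<k]" by (rule map_cong) auto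
      show ?thesis unfolding w_def sl_lessThan m ..
    qed
    finally show ?thesis .
  qed
  finally have "keq scale r R (pscale (detn n A) (w g))" .
  then have "pscale (detn n A) (w g) - R \<in> KK scale r" using keq_sym unfolding keq_def by blast
  then have "pscale (detn n A) (w g) - R \<in> E" using KE by blast
  moreover have "R \<in> E" by (rule RE)
  ultimately have "(pscale (detn n A) (w g) - R) + R \<in> E" unfolding E_def ext_image_sub_def by (rule pF.span_add)
  then show ?thesis unfolding E_def w_def by simp
qed


lemma KE_sub: "KK scale r \<subseteq> ext_image_sub scale N r"
  unfolding KK_def ext_image_sub_def by (rule pF.span_mono) blast

lemma main_tuple:
  assumes N: "subspace N"
    and rel: "\<And>i. i < n \<Longrightarrow> (\<Sum>l<n. scale (A i l) (g l)) \<in> N"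
    and len: "length zs = r"
    and ent: "\<And>i. i < r \<Longrightarrow> (\<phi> i < n \<and> zs ! i = g (\<phi> i)) \<or> (\<not> \<phi> i < n \<and> zs ! i \<in> N)"
  shows "pscale (detn n A) (ebas zs) \<in> ext_image_sub scale N r"
proof -
  define E where "E = ext_image_sub scale N r"
  have KE: "KK scale r \<subseteq> E" unfolding E_def by (rule KE_sub)
  define Tg where "Tg = {i. i < r \<and> \<phi> i < n}"
  show ?thesis
  proof (cases "inj_on \<phi> Tg")
    case False
    then obtain i j where ij: "i \<in> Tg" "j \<in> Tg" "i \<noteq> j" "\<phi> i = \<phi> j" unfolding inj_on_def by blast
    have "zs ! i = zs ! j" using ent[of i] ent[of j] ij unfolding Tg_def by auto
    then have "ebas zs \<in> KK scale r" using ij len unfolding Tg_def by (intro K_rep[of zs r i j]) auto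
    then have "pscale (detn n A) (ebas zs) \<in> KK scale r" by (rule K_span_scale)
    then show ?thesis using KE unfolding E_def by blast
  next
    case True
    define k where "k = card Tg"
    define \<iota> where "\<iota> = sorted_list_of_set Tg"
    have Tsub: "Tg \<subseteq> {..<r}" unfolding Tg_def by blast
    have Tf: "Tg \<subseteq> {..<r}" "card Tg = k" using Tsub k_def by auto
    have kr: "k \<le> r" unfolding k_def using card_mono[OF _ Tsub] by simp
    have kn: "k \<le> n"
    proof -
      have "card (\<phi> ` Tg) = k" unfolding k_def using card_image[OF True] .
      moreover have "\<phi> ` Tg \<subseteq> {..<n}" unfolding Tg_def by blast
      ultimately show ?thesis using card_mono[of "{..<n}" "\<phi> ` Tg"] by simp
    qed
    have bi: "bij_betw (\<lambda>t. \<iota> ! t) {..<k} Tg" unfolding \<iota>_def by (rule sl_facts(5)[OF Tf])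
    obtain \<pi> where pi: "\<pi> permutes {..<r}" "\<forall>t<k. \<pi> t = \<iota> ! t"
    proof -
      have "\<exists>\<pi>. \<pi> permutes {..<r} \<and> (\<forall>t<k. \<pi> t = \<iota> ! t)"
      proof (rule ex_perm_ext)
        show "inj_on (\<lambda>t. \<iota> ! t) {..<k}" using bij_betw_imp_inj_on[OF bi] .
        show "(\<lambda>t. \<iota> ! t) ` {..<k} \<subseteq> {..<r}" using bij_betw_imp_surj_on[OF bi] Tsub by simp
        show "k \<le> r" by (rule kr)
      qed
      then show ?thesis using that by blast
    qed
    obtain \<rho> where rho: "\<rho> permutes {..<n}" "\<forall>t<k. \<rho> t = \<phi> (\<iota> ! t)"
    proof -
      have "\<exists>\<rho>. \<rho> permutes {..<n} \<and> (\<forall>t<k. \<rho> t = (\<phi> \<circ> (\<lambda>t. \<iota> ! t)) t)"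
      proof (rule ex_perm_ext)
        show "inj_on (\<phi> \<circ> (\<lambda>t. \<iota> ! t)) {..<k}"
          using comp_inj_on[OF bij_betw_imp_inj_on[OF bi]] True bij_betw_imp_surj_on[OF bi] by simp
        show "(\<phi> \<circ> (\<lambda>t. \<iota> ! t)) ` {..<k} \<subseteq> {..<n}"
          using bij_betw_imp_surj_on[OF bi] unfolding Tg_def by (auto simp: image_comp[symmetric])
        show "k \<le> n" by (rule kn)
      qed
      then show ?thesis using that by auto
    qed
    define zs' where "zs' = permute_list \<pi> zs"
    have lz: "length zs' = r" unfolding zs'_def using len by simp
    have z'n: "zs' ! t = zs ! (\<pi> t)" if "t < r" for t
      unfolding zs'_def using permute_list_nth[of \<pi> zs t] pi(1) len that by simp
    have z1: "zs' ! t = g (\<rho> t)" if t: "t < k" for t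
    proof -
      have "\<iota> ! t \<in> Tg" using bij_betw_apply[OF bi] t by simp
      then have "zs ! (\<iota> ! t) = g (\<phi> (\<iota> ! t))" using ent[of "\<iota> ! t"] unfolding Tg_def by auto
      then show ?thesis using z'n[of t] t kr pi(2) rho(2) by simp
    qed
    have z2: "zs' ! t \<in> N" if t: "k \<le> t" "t < r" for t
    proof -
      have ptr: "\<pi> t < r" using permutes_in_image[OF pi(1)] t by simp
      have "\<pi> t \<notin> Tg"
      proof
        assume "\<pi> t \<in> Tg"
        then have "\<pi> t \<in> (\<lambda>s. \<iota> ! s) ` {..<k}" using bij_betw_imp_surj_on[OF bi] by simp
        then obtain s where s: "s < k" "\<pi> t = \<iota> ! s" by auto
        then have "\<pi> t = \<pi> s" using pi(2) by simp
        then have "t = s" using permutes_inj[OF pi(1)] by (simp add: inj_eq)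
        then show False using s t by simp
      qed
      then have "zs ! (\<pi> t) \<in> N" using ent[OF ptr] unfolding Tg_def using ptr by auto
      then show ?thesis using z'n t by simp
    qed
    define Y where "Y = drop k zs'"
    have zsplit: "zs' = map (\<lambda>t. g (\<rho> t)) [0..<k] @ Y"
    proof (rule nth_equalityI)
      show "length zs' = length (map (\<lambda>t. g (\<rho> t)) [0..<k] @ Y)" using lz kr by (simp add: Y_def)
      fix t assume "t < length zs'"
      then show "zs' ! t = (map (\<lambda>t. g (\<rho> t)) [0..<k] @ Y) ! t"
        using z1 kr lz by (cases "t < k") (simp_all add: Y_def nth_append)
    qed
    have YN: "set Y \<subseteq> N"
    proof
      fix y assume "y \<in> set Y"
      then obtain u where u: "u < length Y" "Y ! u = y" by (auto simp: in_set_conv_nth)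
      then have "y = zs' ! (k + u)" using kr lz by (simp add: Y_def)
      moreover have "k + u < r" using u kr lz by (simp add: Y_def)
      ultimately show "y \<in> N" using z2 by simp
    qed
    have rY: "r = k + length Y" using lz kr by (simp add: Y_def)
    have rel': "(\<Sum>c<n. scale (A i (\<rho> c)) (g (\<rho> c))) \<in> N" if i: "i < n" for i
    proof -
      have "(\<Sum>c<n. scale (A i (\<rho> c)) (g (\<rho> c))) = (\<Sum>l<n. scale (A i l) (g l))"
        using sum.reindex_bij_betw[OF permutes_imp_bij[OF rho(1)], of "\<lambda>l. scale (A i l) (g l)"] by simp
      then show ?thesis using rel[OF i] by simp
    qed
    have c1: "pscale (detn n (\<lambda>i c. A i (\<rho> c))) (ebas zs') \<in> E"
      unfolding E_def zsplit
      by (rule core[OF N rel' kn YN rY])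
    have dA: "detn n (\<lambda>i c. A i (\<rho> c)) = of_int (sign \<rho>) * detn n A" by (rule detn_cols_perm[OF rho(1)])
    have c2: "pscale (detn n A) (ebas zs') \<in> E"
    proof -
      have "pscale (of_int (sign \<rho>)) (pscale (detn n (\<lambda>i c. A i (\<rho> c))) (ebas zs')) \<in> E"
        using c1 unfolding E_def ext_image_sub_def by (rule pF.span_scale)
      moreover have "of_int (sign \<rho>) * detn n (\<lambda>i c. A i (\<rho> c)) = detn n A"
        unfolding dA mult.assoc[symmetric] of_int_mult[symmetric] by simp
      ultimately show ?thesis by simp
    qed
    have kp: "ebas zs' - pscale (of_int (sign \<pi>)) (ebas zs) \<in> KK scale r"
      unfolding zs'_def by (rule K_perm[OF pi(1), rule_format, OF len])
    define sp where "sp = (of_int (sign \<pi>) :: 'a)"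
    define X where "X = (ebas zs :: 'b list \<Rightarrow> 'a)"
    define X' where "X' = (ebas zs' :: 'b list \<Rightarrow> 'a)"
    define d where "d = detn n A"
    have ssX: "pscale sp (pscale sp X) = X"
      unfolding sp_def by (simp flip: of_int_mult)
    have t1: "pscale (sp * d) X' = pscale sp (pscale d X')" by (rule pF.scale_scale[symmetric])
    have t2: "pscale (sp * d) (pscale sp X) = pscale d X"
    proof -
      have "pscale (sp * d) (pscale sp X) = pscale d (pscale sp (pscale sp X))" by (simp only: pF.scale_scale mult_ac)
      also have "\<dots> = pscale d X" by (simp only: ssX)
      finally show ?thesis .
    qed
    have "pscale d X = pscale sp (pscale d X') - pscale (sp * d) (X' - pscale sp X)"
      unfolding pF.scale_right_diff_distrib t1 t2 by simp
    then have eqn: "pscale (detn n A) (ebas zs) = pscale (of_int (sign \<pi>)) (pscale (detn n A) (ebas zs'))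
        - pscale (of_int (sign \<pi>) * detn n A) (ebas zs' - pscale (of_int (sign \<pi>)) (ebas zs))"
      unfolding sp_def X_def X'_def d_def .
    have m1: "pscale (of_int (sign \<pi>)) (pscale (detn n A) (ebas zs')) \<in> E"
      using c2 unfolding E_def ext_image_sub_def by (rule pF.span_scale)
    have m2: "pscale (of_int (sign \<pi>) * detn n A) (ebas zs' - pscale (of_int (sign \<pi>)) (ebas zs)) \<in> E"
      using K_span_scale[OF kp] KE by (rule subsetD[rotated])
    show ?thesis unfolding eqn using m1 m2 unfolding E_def ext_image_sub_def by (rule pF.span_diff)
  qed
qed


lemma span_repr:
  fixes g :: "nat \<Rightarrow> 'b"
  assumes "v \<in> span (g ` {..<n})"
  shows "\<exists>c. v = (\<Sum>l<n. scale (c l) (g l))"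
proof -
  define V where "V = {v. \<exists>c. v = (\<Sum>l<n. scale (c l) (g l))}"
  have gV: "g ` {..<n} \<subseteq> V"
  proof
    fix x assume "x \<in> g ` {..<n}"
    then obtain l where l: "l < n" "x = g l" by auto
    have "(\<Sum>j<n. scale (if j = l then 1 else 0) (g j)) = (\<Sum>j<n. if j = l then g j else 0)"
      by (intro sum.cong refl) simp
    also have "\<dots> = g l" using l by (subst sum.delta) auto
    finally show "x \<in> V" unfolding V_def using l by (intro CollectI exI[of _ "\<lambda>j. if j = l then 1 else 0"]) simp
  qed
  have sV: "subspace V"
  proof (rule subspaceI)
    show "0 \<in> V" unfolding V_def by (intro CollectI exI[of _ "\<lambda>_. 0"]) simp
    fix x y assume x: "x \<in> V" and y: "y \<in> V"
    then obtain c d where c: "x = (\<Sum>l<n. scale (c l) (g l))" and d: "y = (\<Sum>l<n. scale (d l) (g l))"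
      unfolding V_def by blast
    have "x + y = (\<Sum>l<n. scale (c l + d l) (g l))" unfolding c d by (simp add: scale_left_distrib sum.distrib)
    then show "x + y \<in> V" unfolding V_def by (intro CollectI exI[of _ "\<lambda>l. c l + d l"])
  next
    fix a x assume x: "x \<in> V"
    then obtain c where c: "x = (\<Sum>l<n. scale (c l) (g l))" unfolding V_def by blast
    have "scale a x = (\<Sum>l<n. scale (a * c l) (g l))" unfolding c by (simp add: scale_sum_right)
    then show "scale a x \<in> V" unfolding V_def by (intro CollectI exI[of _ "\<lambda>l. a * c l"])
  qed
  have "span (g ` {..<n}) \<subseteq> V" by (rule span_minimal[OF gV sV])
  then show ?thesis using assms unfolding V_def by blast
qed

lemma main_gen:
  fixes g :: "nat \<Rightarrow> 'b" and A :: "nat \<Rightarrow> nat \<Rightarrow> 'a"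
  assumes N: "subspace N" and spn: "\<And>m. \<exists>v\<in>span (g ` {..<n}). \<exists>y\<in>N. m = v + y"
    and rel: "\<And>i. i < n \<Longrightarrow> (\<Sum>l<n. scale (A i l) (g l)) \<in> N" and len: "length xs = r"
  shows "pscale (detn n A) (ebas xs) \<in> ext_image_sub scale N r"
proof -
  define E where "E = ext_image_sub scale N r"
  have KE: "KK scale r \<subseteq> E" unfolding E_def by (rule KE_sub)
  have ex: "\<exists>c y. y \<in> N \<and> m = (\<Sum>l<n. scale (c l) (g l)) + y" for m
  proof -
    obtain v y where v: "v \<in> span (g ` {..<n})" and y: "y \<in> N" and m: "m = v + y" using spn[of m] by blast
    obtain c where "v = (\<Sum>l<n. scale (c l) (g l))" using span_repr[OF v] by blast
    then show ?thesis using y m by blast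
  qed
  obtain CF YY where cy: "\<And>m. YY m \<in> N \<and> m = (\<Sum>l<n. scale (CF m l) (g l)) + YY m"
    using ex by metis
  define B where "B = (\<lambda>t l. if l < n then CF (xs ! t) l else 1)"
  define h where "h = (\<lambda>t l. if l < n then g l else YY (xs ! t))"
  have sum_eq: "(\<Sum>l\<in>{..n}. scale (B t l) (h t l)) = xs ! t" for t
  proof -
    have "(\<Sum>l\<in>{..n}. scale (B t l) (h t l)) = (\<Sum>l<Suc n. scale (B t l) (h t l))"
      by (simp add: lessThan_Suc_atMost)
    also have "\<dots> = (\<Sum>l<n. scale (B t l) (h t l)) + scale (B t n) (h t n)" by (rule sum.lessThan_Suc)
    also have "(\<Sum>l<n. scale (B t l) (h t l)) = (\<Sum>l<n. scale (CF (xs ! t) l) (g l))"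
      by (intro sum.cong refl) (simp add: B_def h_def)
    also have "scale (B t n) (h t n) = YY (xs ! t)" by (simp add: B_def h_def)
    finally show ?thesis using cy[of "xs ! t"] by simp
  qed
  define zs where "zs = (\<lambda>\<phi>. map (\<lambda>i. if i \<in> {..<r} then h i (\<phi> i) else xs ! i) [0..<r])"
  have km: "keq scale r (ebas (map (\<lambda>i. if i \<in> {..<r} then (\<Sum>l\<in>{..n}. scale (B i l) (h i l)) else xs ! i) [0..<r]))
      (\<Sum>\<phi>\<in>PiE {..<r} (\<lambda>_. {..n}). pscale (\<Prod>i\<in>{..<r}. B i (\<phi> i)) (ebas (zs \<phi>)))"
    unfolding zs_def by (rule K_multi) (use len in auto)
  have mx: "map (\<lambda>i. if i \<in> {..<r} then (\<Sum>l\<in>{..n}. scale (B i l) (h i l)) else xs ! i) [0..<r] = xs"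
  proof -
    have "map (\<lambda>i. if i \<in> {..<r} then (\<Sum>l\<in>{..n}. scale (B i l) (h i l)) else xs ! i) [0..<r] = map (\<lambda>i. xs ! i) [0..<r]"
      by (rule map_cong) (simp_all add: sum_eq)
    also have "\<dots> = xs" using len by (metis map_nth)
    finally show ?thesis .
  qed
  define S where "S = (\<Sum>\<phi>\<in>PiE {..<r} (\<lambda>_. {..n}). pscale (\<Prod>i\<in>{..<r}. B i (\<phi> i)) (ebas (zs \<phi>)))"
  have d1: "ebas xs - S \<in> KK scale r" using km unfolding mx keq_def S_def .
  have d2: "pscale (detn n A) (ebas (zs \<phi>)) \<in> E" if ph: "\<phi> \<in> PiE {..<r} (\<lambda>_. {..n})" for \<phi>
    unfolding E_def
  proof (rule main_tuple[OF N rel, where \<phi>=\<phi>])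
    show "length (zs \<phi>) = r" by (simp add: zs_def)
    fix i assume i: "i < r"
    have zi: "zs \<phi> ! i = h i (\<phi> i)" using i by (simp add: zs_def)
    show "(\<phi> i < n \<and> zs \<phi> ! i = g (\<phi> i)) \<or> (\<not> \<phi> i < n \<and> zs \<phi> ! i \<in> N)"
      using cy[of "xs ! i"] unfolding zi h_def by auto
  qed
  have "pscale (detn n A) (ebas xs) = pscale (detn n A) (ebas xs - S) + pscale (detn n A) S"
    by (simp add: pF.scale_right_diff_distrib)
  also have "pscale (detn n A) S = (\<Sum>\<phi>\<in>PiE {..<r} (\<lambda>_. {..n}). pscale (\<Prod>i\<in>{..<r}. B i (\<phi> i)) (pscale (detn n A) (ebas (zs \<phi>))))"
    unfolding S_def by (simp add: pF.scale_sum_right mult.commute)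
  finally have eq: "pscale (detn n A) (ebas xs) = pscale (detn n A) (ebas xs - S) +
      (\<Sum>\<phi>\<in>PiE {..<r} (\<lambda>_. {..n}). pscale (\<Prod>i\<in>{..<r}. B i (\<phi> i)) (pscale (detn n A) (ebas (zs \<phi>))))" .
  have e1: "pscale (detn n A) (ebas xs - S) \<in> E" using K_span_scale[OF d1] KE by (rule subsetD[rotated])
  have e2: "(\<Sum>\<phi>\<in>PiE {..<r} (\<lambda>_. {..n}). pscale (\<Prod>i\<in>{..<r}. B i (\<phi> i)) (pscale (detn n A) (ebas (zs \<phi>)))) \<in> E"
    unfolding E_def ext_image_sub_def
  proof (rule pF.span_sum)
    fix \<phi> assume ph: "\<phi> \<in> PiE {..<r} (\<lambda>_. {..n})"
    show "pscale (\<Prod>i\<in>{..<r}. B i (\<phi> i)) (pscale (detn n A) (ebas (zs \<phi>)))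
        \<in> pF.span ({ebas ys |ys. length ys = r \<and> set ys \<subseteq> N} \<union> ext_rels scale r)"
      by (rule pF.span_scale) (use d2[OF ph] in \<open>simp add: E_def ext_image_sub_def\<close>)
  qed
  show ?thesis unfolding eq using e1 e2 unfolding E_def ext_image_sub_def by (rule pF.span_add)
qed

end

theorem lemma3p9:
  fixes sc :: "'a::comm_ring_1 \<Rightarrow> 'm::ab_group_add \<Rightarrow> 'm"
    and N :: "'m set" and r :: nat
  assumes "module sc"
    and "module.subspace sc N"
    and "fin_gen_sub sc N"
    and "fin_presented sc"
    and "r > 0"
  shows "\<forall>a\<in>fitt_quot sc N. \<forall>f\<in>free_tuples sc r. pscale a f \<in> ext_image_sub sc N r"
proof -
  interpret M: module sc by (rule assms(1))
  define E where "E = ext_image_sub sc N r"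
  define G where "G = {detn n A | n (g :: nat \<Rightarrow> 'm) A.
      (\<forall>m. \<exists>v\<in>module.span sc (g ` {..<n}). \<exists>y\<in>N. m = v + y) \<and>
      (\<forall>i<n. (\<Sum>j<n. sc (A i j) (g j)) \<in> N)}"
  define Good where "Good = {a. \<forall>f\<in>free_tuples sc r. pscale a f \<in> E}"
  have Esub: "pF.subspace E" unfolding E_def ext_image_sub_def by simp
  have gen: "G \<subseteq> Good"
  proof
    fix d assume "d \<in> G"
    then obtain n g A where d: "d = detn n A" and spn: "\<forall>m. \<exists>v\<in>M.span (g ` {..<n}). \<exists>y\<in>N. m = v + y"
      and rel: "\<forall>i<n. (\<Sum>j<n. sc (A i j) (g j)) \<in> N" unfolding G_def by blast
    have base: "pscale d (ebas xs) \<in> E" if "length xs = r" for xs :: "'m list"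
      unfolding d E_def by (rule M.main_gen[OF assms(2)]) (use spn rel that in auto)
    show "d \<in> Good" unfolding Good_def
    proof (intro CollectI ballI)
      fix f assume f: "f \<in> free_tuples sc r"
      have "f \<in> pF.span {ebas xs | xs. length xs = r}" using f unfolding free_tuples_def .
      moreover have "pF.span {ebas xs | xs. length xs = r} \<subseteq> {f. pscale d f \<in> E}"
      proof (rule pF.span_minimal)
        show "{ebas xs | xs. length xs = r} \<subseteq> {f. pscale d f \<in> E}" using base by blast
        show "pF.subspace {f. pscale d f \<in> E}"
        proof (rule pF.subspaceI)
          show "0 \<in> {f. pscale d f \<in> E}" using pF.subspace_0[OF Esub] by simp
          fix x y assume "x \<in> {f. pscale d f \<in> E}" "y \<in> {f. pscale d f \<in> E}"
          then show "x + y \<in> {f. pscale d f \<in> E}" using pF.subspace_add[OF Esub]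
            by (simp add: pF.scale_right_distrib)
        next
          fix c x assume "x \<in> {f. pscale d f \<in> E}"
          then show "pscale c x \<in> {f. pscale d f \<in> E}" using pF.subspace_scale[OF Esub, of "pscale d x" c]
            by (simp add: mult.commute)
        qed
      qed
      ultimately show "pscale d f \<in> E" by blast
    qed
  qed
  have sub: "rM.subspace Good"
  proof (rule rM.subspaceI)
    show "0 \<in> Good" unfolding Good_def using pF.subspace_0[OF Esub] by simp
    fix x y assume x: "x \<in> Good" and y: "y \<in> Good"
    show "x + y \<in> Good" unfolding Good_def
    proof (intro CollectI ballI)
      fix f assume "f \<in> free_tuples sc r"
      then have "pscale x f \<in> E" "pscale y f \<in> E" using x y unfolding Good_def by auto
      then show "pscale (x + y) f \<in> E" using pF.subspace_add[OF Esub] by (simp add: pF.scale_left_distrib)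
    qed
  next
    fix c x assume x: "x \<in> Good"
    show "c * x \<in> Good" unfolding Good_def
    proof (intro CollectI ballI)
      fix f assume "f \<in> free_tuples sc r"
      then have "pscale x f \<in> E" using x unfolding Good_def by auto
      then show "pscale (c * x) f \<in> E" using pF.subspace_scale[OF Esub, of "pscale x f" c] by simp
    qed
  qed
  have "fitt_quot sc N \<subseteq> Good"
    unfolding fitt_quot_def ideal_gen_def G_def[symmetric] by (rule rM.span_minimal[OF gen sub])
  then show ?thesis unfolding Good_def E_def by blast
qed

end
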